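(* Let $k\ge 2$, $s\ge 5$ and let $\mathbf a=(a_1,\dots,a_s)$ be nonzero integers. Then for every prime $p$ the limit $\chi_{p}$ exists, the series $\mathfrak S_{\mathbf a}$ converges, and \[\mathfrak S_{\mathbf a}=\prod_{p} \chi_{p},\] where the product converges absolutely, so that $\mathfrak S_{\mathbf a}>0$ if and only if $\chi_{p}>0$ for all $p$ (and always $\chi_{p}\ge0$, so $\mathfrak S_{\mathbf a}\ge 0$).
   Context: $e(x)=e^{2\pi ix}$, $e_q(x)=e(x/q)$, $\varphi$ is Euler's function. $W(q,r)=\sum_{1\le h\le q,\ (h,q)=1}e_q(rh^k)$, $T_{\mathbf a}(q)=\varphi(q)^{-s}\sum_{1\le r\le q,\ (r,q)=1}\prod_{j=1}^sW(q,a_jr)$, $\mathfrak S_{\mathbf a}=\sum_{q=1}^\infty T_{\mathbf a}(q)$. $M_{\mathbf a}(p^n)$ is the number of $(x_1,\dots,x_s)\in((\mathbb Z/p^n\mathbb Z)^\times)^s$ with $a_1x_1^k+\dots+a_sx_s^k\equiv0\pmod{p^n}$, and $\chi_p=\lim_{n\to\infty}p^n\varphi(p^n)^{-s}M_{\mathbf a}(p^n)$. *)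

theory Defs
  imports "HOL-Analysis.Analysis" "HOL-Number_Theory.Number_Theory" "HOL-Library.FuncSet"
begin

definition e :: "real \<Rightarrow> complex" where
  "e x = exp (2 * of_real pi * \<i> * of_real x)"

definition e_q :: "nat \<Rightarrow> real \<Rightarrow> complex" where
  "e_q q x = e (x / real q)"

definition W :: "nat \<Rightarrow> nat \<Rightarrow> int \<Rightarrow> complex" where
  "W k q r = (\<Sum>h\<in>{h. 1 \<le> h \<and> h \<le> q \<and> coprime h q}. e_q q (of_int (r * int h ^ k)))"

definition T :: "nat \<Rightarrow> nat \<Rightarrow> (nat \<Rightarrow> int) \<Rightarrow> nat \<Rightarrow> complex" where
  "T k s a q = (1 / of_nat (totient q) ^ s) *
     (\<Sum>r\<in>{r. 1 \<le> r \<and> r \<le> q \<and> coprime r q}. \<Prod>j\<in>{1..s}. W k q (a j * int r))"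

definition singular_series :: "nat \<Rightarrow> nat \<Rightarrow> (nat \<Rightarrow> int) \<Rightarrow> complex" where
  "singular_series k s a = (\<Sum>q. T k s a (Suc q))"

text \<open>M_a(m): number of (x_1..x_s) in ((Z/mZ)^*)^s with a_1 x_1^k + ... + a_s x_s^k = 0 mod m;
  residues are represented by 0 <= x_j < m.\<close>
definition M :: "nat \<Rightarrow> nat \<Rightarrow> (nat \<Rightarrow> int) \<Rightarrow> nat \<Rightarrow> nat" where
  "M k s a m = card {x \<in> {1..s} \<rightarrow>\<^sub>E {0..<m}.
      (\<forall>j\<in>{1..s}. coprime (x j) m) \<and> int m dvd (\<Sum>j\<in>{1..s}. a j * int (x j) ^ k)}"

definition chi_seq :: "nat \<Rightarrow> nat \<Rightarrow> (nat \<Rightarrow> int) \<Rightarrow> nat \<Rightarrow> nat \<Rightarrow> real" where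
  "chi_seq k s a p n = real (p ^ n) * (1 / real (totient (p ^ n)) ^ s) * real (M k s a (p ^ n))"

definition chi :: "nat \<Rightarrow> nat \<Rightarrow> (nat \<Rightarrow> int) \<Rightarrow> nat \<Rightarrow> real" where
  "chi k s a p = lim (chi_seq k s a p)"

text \<open>Factor of the Euler product indexed by all naturals: chi_p at primes, 1 elsewhere.\<close>
definition euler_factor :: "nat \<Rightarrow> nat \<Rightarrow> (nat \<Rightarrow> int) \<Rightarrow> nat \<Rightarrow> real" where
  "euler_factor k s a n = (if prime n then chi k s a n else 1)"

end

theory Submission
  imports Defs
begin

lemma e_add: "e (x + y) = e x * e y"
  by (simp add: e_def distrib_left exp_add)

lemma e_eq_1_iff: "e x = 1 \<longleftrightarrow> x \<in> \<int>"
proof -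
  have "e x = 1 \<longleftrightarrow> (\<exists>n::int. 2 * pi * x = real_of_int (2 * n) * pi)"
    unfolding e_def exp_eq_1 by (simp add: mult.commute mult.left_commute)
  also have "\<dots> \<longleftrightarrow> (\<exists>n::int. x = of_int n)"
    by (auto simp: field_simps)
  also have "\<dots> \<longleftrightarrow> x \<in> \<int>" by (auto elim: Ints_cases)
  finally show ?thesis .
qed

lemma e_int [simp]: "e (of_int n) = 1"
  by (simp add: e_eq_1_iff)

lemma e_of_nat [simp]: "e (of_nat n) = 1"
  using e_int[of "int n"] by simp

lemma e_zero [simp]: "e 0 = 1"
  using e_int[of 0] by simp

lemma e_periodic: "x - y \<in> \<int> \<Longrightarrow> e x = e y"
proof -
  assume "x - y \<in> \<int>"
  then have "e (x - y) = 1" by (simp add: e_eq_1_iff)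
  then have "e y * e (x - y) = e y" by simp
  then show ?thesis by (simp add: e_add[symmetric])
qed

lemma e_minus: "e (- x) * e x = 1"
  by (simp add: e_add[symmetric])

lemma cnj_e: "cnj (e x) = e (- x)"
  by (simp add: e_def exp_cnj)

lemma norm_e [simp]: "norm (e x) = 1"
  by (simp add: e_def norm_exp_eq_Re)

lemma e_sum: "e (\<Sum>i\<in>A. f i) = (\<Prod>i\<in>A. e (f i))"
proof (cases "finite A")
  case True then show ?thesis by (induction A rule: finite_induct) (auto simp: e_add)
qed simp

lemma e_power: "e x ^ n = e (of_nat n * x)"
  by (induction n) (auto simp: e_add[symmetric] algebra_simps)

lemma e_q_int_dvd: "q > 0 \<Longrightarrow> int q dvd N \<Longrightarrow> e_q q (of_int N) = 1"
proof -
  assume "q > 0" "int q dvd N"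
  then obtain m where "N = int q * m" by auto
  then have "of_int N / real q = of_int m" using \<open>q > 0\<close> by simp
  then show ?thesis by (simp add: e_q_def)
qed

lemma e_q_cong: "q > 0 \<Longrightarrow> [N = N'] (mod int q) \<Longrightarrow> e_q q (of_int N) = e_q q (of_int N')"
proof -
  assume q: "q > 0" and c: "[N = N'] (mod int q)"
  then obtain m where "N - N' = int q * m"
    by (metis cong_iff_dvd_diff dvdE cong_sym)
  then have "of_int N / real q - of_int N' / real q = of_int m"
    using q by (simp add: field_simps)
  then show ?thesis unfolding e_q_def by (intro e_periodic) simp
qed

lemma e_q_add: "e_q q (x + y) = e_q q x * e_q q y"
  by (simp add: e_q_def add_divide_distrib e_add)

lemma e_q_sum_geom:
  assumes q: "q > 0" and n: "n > 0" and qn: "q dvd n"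
  shows "(\<Sum>u<n. e_q q (of_int (int u * N))) = (if int q dvd N then of_nat n else 0)"
proof -
  define z where "z = e (of_int N / real q)"
  have zu: "e_q q (of_int (int u * N)) = z ^ u" for u
    by (simp add: z_def e_power e_q_def)
  have S: "(\<Sum>u<n. e_q q (of_int (int u * N))) = (\<Sum>u<n. z ^ u)"
    by (rule sum.cong) (simp_all only: zu)
  show ?thesis
  proof (cases "int q dvd N")
    case True
    then have "z = 1" using e_q_int_dvd[OF q True] by (simp add: z_def e_q_def)
    then show ?thesis using True unfolding S by simp
  next
    case False
    have "z \<noteq> 1"
    proof
      assume "z = 1"
      then have "of_int N / real q \<in> \<int>" by (simp add: z_def e_eq_1_iff)
      then obtain m where m: "of_int N / real q = of_int m" by (auto elim: Ints_cases)
      then have "real_of_int N = real q * of_int m" using q by (simp add: field_simps)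
      then have "N = int q * m" by (metis of_int_eq_iff of_int_mult of_int_of_nat_eq)
      then show False using False by simp
    qed
    obtain c where c: "n = q * c" using qn by auto
    have "z ^ n = e (of_nat n * (of_int N / real q))" by (simp add: z_def e_power)
    also have "of_nat n * (of_int N / real q) = of_int (int c * N)"
      using q c by (simp add: field_simps)
    finally have "z ^ n = e (of_int (int c * N))" .
    hence "z ^ n = 1" by (simp only: e_int)
    then show ?thesis using False \<open>z \<noteq> 1\<close> unfolding S by (simp add: sum_gp_strict)
  qed
qed

lemma e_q_sum_geom1:
  assumes q: "q > 0"
  shows "(\<Sum>r\<in>{1..q}. e_q q (of_int (int r * N))) = (if int q dvd N then of_nat q else 0)"
proof -
  have "(\<Sum>r\<in>{1..q}. e_q q (of_int (int r * N))) = (\<Sum>u<q. e_q q (of_int (int (Suc u) * N)))"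
    by (rule sum.reindex_bij_witness[of _ Suc "\<lambda>r. r - 1"]) auto
  also have "\<dots> = (\<Sum>u<q. e_q q (of_int N) * e_q q (of_int (int u * N)))"
    by (simp add: e_q_add[symmetric] algebra_simps)
  also have "\<dots> = e_q q (of_int N) * (\<Sum>u<q. e_q q (of_int (int u * N)))"
    by (simp only: sum_distrib_left)
  also have "\<dots> = e_q q (of_int N) * (if int q dvd N then of_nat q else 0)"
    by (simp only: e_q_sum_geom[OF q q dvd_refl])
  also have "\<dots> = (if int q dvd N then of_nat q else 0)"
    using e_q_int_dvd[OF q] by auto
  finally show ?thesis .
qed

lemma tot_set: "{h. 1 \<le> h \<and> h \<le> q \<and> coprime h q} = totatives q"
  by (auto simp: in_totatives_iff)

lemma W_alt: "W k q r = (\<Sum>h\<in>totatives q. e_q q (of_int (r * int h ^ k)))"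
  unfolding W_def tot_set ..

lemma T_alt: "T k s a q = (1 / of_nat (totient q) ^ s) *
     (\<Sum>r\<in>totatives q. \<Prod>j\<in>{1..s}. W k q (a j * int r))"
  unfolding T_def tot_set ..

definition NN :: "nat \<Rightarrow> nat \<Rightarrow> (nat \<Rightarrow> int) \<Rightarrow> (nat \<Rightarrow> nat) \<Rightarrow> int" where
  "NN k s a x = (\<Sum>j\<in>{1..s}. a j * int (x j) ^ k)"

definition Aset :: "nat \<Rightarrow> nat \<Rightarrow> (nat \<Rightarrow> int) \<Rightarrow> nat \<Rightarrow> (nat \<Rightarrow> nat) set" where
  "Aset k s a m = {x \<in> {1..s} \<rightarrow>\<^sub>E {0..<m}.
      (\<forall>j\<in>{1..s}. coprime (x j) m) \<and> int m dvd NN k s a x}"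

lemma M_Aset: "M k s a m = card (Aset k s a m)"
  unfolding M_def Aset_def NN_def ..

lemma finite_Aset [simp]: "finite (Aset k s a m)"
  unfolding Aset_def by (rule finite_subset[of _ "{1..s} \<rightarrow>\<^sub>E {0..<m}"]) (auto intro: finite_PiE)

lemma e_q_sum: "e_q q (\<Sum>i\<in>A. f i) = (\<Prod>i\<in>A. e_q q (f i))"
  unfolding e_q_def sum_divide_distrib e_sum ..

lemma W_1 [simp]: "W k 1 c = 1"
  unfolding W_alt by (simp add: e_q_def)

lemma W_cong: "q > 0 \<Longrightarrow> [c = c'] (mod int q) \<Longrightarrow> W k q c = W k q c'"
  unfolding W_alt
  by (intro sum.cong refl e_q_cong) (auto intro: cong_mult cong_refl)

definition Bset :: "nat \<Rightarrow> nat \<Rightarrow> (nat \<Rightarrow> int) \<Rightarrow> nat \<Rightarrow> (nat \<Rightarrow> nat) set" where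
  "Bset k s a q = {x \<in> {1..s} \<rightarrow>\<^sub>E totatives q. int q dvd NN k s a x}"

lemma card_Bset_Aset:
  assumes "q > 0"
  shows "card (Bset k s a q) = card (Aset k s a q)"
proof (cases "q = 1")
  case True
  have "Bset k s a q = {1..s} \<rightarrow>\<^sub>E {1}" using True by (auto simp: Bset_def)
  moreover have "Aset k s a q = {1..s} \<rightarrow>\<^sub>E {0}" using True by (auto simp: Aset_def)
  ultimately show ?thesis by (simp add: card_PiE)
next
  case False
  then have q1: "q > 1" using assms by simp
  have "x \<in> totatives q \<longleftrightarrow> x \<in> {0..<q} \<and> coprime x q" for x
  proof
    assume "x \<in> totatives q" then show "x \<in> {0..<q} \<and> coprime x q"
      using totatives_less[of x q] q1 by (auto simp: in_totatives_iff)
  next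
    assume h: "x \<in> {0..<q} \<and> coprime x q"
    have "x \<noteq> 0"
    proof
      assume "x = 0" then have "coprime 0 q" using h by simp
      then show False using q1 by simp
    qed
    then show "x \<in> totatives q" using h by (auto simp add: in_totatives_iff)
  qed
  then have "Bset k s a q = Aset k s a q"
    unfolding Bset_def Aset_def by (auto simp: PiE_iff)
  then show ?thesis by simp
qed

lemma counting_identity:
  assumes q: "q > 0"
  shows "of_nat q * of_nat (M k s a q) = (\<Sum>r\<in>{1..q}. \<Prod>j\<in>{1..s}. W k q (a j * int r))"
proof -
  have "(\<Sum>r\<in>{1..q}. \<Prod>j\<in>{1..s}. W k q (a j * int r)) =
        (\<Sum>r\<in>{1..q}. \<Sum>x\<in>{1..s} \<rightarrow>\<^sub>E totatives q. \<Prod>j\<in>{1..s}. e_q q (of_int (a j * int r * int (x j) ^ k)))"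
    unfolding W_alt by (intro sum.cong refl prod_sum_PiE) auto
  also have "\<dots> = (\<Sum>r\<in>{1..q}. \<Sum>x\<in>{1..s} \<rightarrow>\<^sub>E totatives q. e_q q (of_int (int r * NN k s a x)))"
  proof (intro sum.cong refl)
    fix r x
    have "(\<Prod>j\<in>{1..s}. e_q q (of_int (a j * int r * int (x j) ^ k))) =
          e_q q (\<Sum>j\<in>{1..s}. of_int (a j * int r * int (x j) ^ k))"
      by (simp only: e_q_sum)
    also have "(\<Sum>j\<in>{1..s}. (of_int (a j * int r * int (x j) ^ k)::real)) = of_int (int r * NN k s a x)"
      unfolding NN_def by (simp add: sum_distrib_left algebra_simps)
    finally show "(\<Prod>j\<in>{1..s}. e_q q (of_int (a j * int r * int (x j) ^ k))) = e_q q (of_int (int r * NN k s a x))" .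
  qed
  also have "\<dots> = (\<Sum>x\<in>{1..s} \<rightarrow>\<^sub>E totatives q. \<Sum>r\<in>{1..q}. e_q q (of_int (int r * NN k s a x)))"
    by (rule sum.swap)
  also have "\<dots> = (\<Sum>x\<in>{1..s} \<rightarrow>\<^sub>E totatives q. if int q dvd NN k s a x then of_nat q else 0)"
    by (intro sum.cong refl e_q_sum_geom1[OF q])
  also have "\<dots> = of_nat q * of_nat (card (Bset k s a q))"
    unfolding Bset_def by (simp add: sum.If_cases[OF finite_PiE] Int_def conj_commute)
  also have "\<dots> = of_nat q * of_nat (M k s a q)"
    using card_Bset_Aset[OF q] M_Aset by simp
  finally show ?thesis ..
qed

lemma coprime_by_primes:
  assumes "\<And>p. prime p \<Longrightarrow> p dvd a \<Longrightarrow> p dvd (b::nat) \<Longrightarrow> False"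
  shows "coprime a b"
proof (rule ccontr)
  assume "\<not> coprime a b"
  then have "gcd a b \<noteq> 1" unfolding coprime_iff_gcd_eq_1 .
  from prime_factor_nat[OF this] obtain p where "prime p" "p dvd gcd a b" by blast
  then show False using assms by auto
qed

lemma lift_unit:
  assumes dq: "d dvd q" and q: "q > 0" and x: "coprime x d"
  shows "\<exists>g\<in>totatives q. g mod d = x mod d"
proof -
  define m where "m = (\<Prod>p\<in>{p\<in>prime_factors q. \<not> p dvd x}. p)"
  define g0 where "g0 = x + d * m"
  have fin: "finite {p\<in>prime_factors q. \<not> p dvd x}" by simp
  have cop: "coprime g0 q"
  proof (rule coprime_by_primes)
    fix p :: nat assume p: "prime p" "p dvd g0" "p dvd q"
    show False
    proof (cases "p dvd x")
      case True
      have "\<not> p dvd d"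
      proof
        assume "p dvd d"
        then have "is_unit p" using coprime_common_divisor[OF x True] by simp
        then show False using p(1) by (simp add: not_prime_unit)
      qed
      moreover have "\<not> p dvd m"
      proof
        assume "p dvd m"
        then obtain p' where p': "p' \<in> {p\<in>prime_factors q. \<not> p dvd x}" "p dvd p'"
          using prime_dvd_prod_iff[OF fin p(1)] unfolding m_def by auto
        then have "p = p'" using p(1) by (auto intro: primes_dvd_imp_eq dest: in_prime_factors_imp_prime)
        then show False using p' True by auto
      qed
      ultimately have "\<not> p dvd d * m" using p(1) by (simp add: prime_dvd_mult_iff)
      moreover have "p dvd d * m" using p(2) True unfolding g0_def by (simp add: dvd_add_right_iff)
      ultimately show False by simp
    next
      case False
      have "p \<in> {p\<in>prime_factors q. \<not> p dvd x}" using p False q by (auto simp: in_prime_factors_iff)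
      then have "p dvd m" unfolding m_def using fin by (intro dvd_prodI)
      then have "p dvd d * m" by simp
      then have "p dvd x" using p(2) unfolding g0_def by (simp add: dvd_add_left_iff)
      then show False using False by simp
    qed
  qed
  show ?thesis
  proof (cases "q = 1")
    case True
    then have "d = 1" using dq by simp
    then show ?thesis using True by auto
  next
    case False
    then have q1: "q > 1" using q by simp
    define g where "g = g0 mod q"
    have "coprime g q" using cop q unfolding g_def by simp
    moreover have "g \<noteq> 0"
    proof
      assume "g = 0"
      then have "coprime 0 q" using \<open>coprime g q\<close> by simp
      then show False using q1 by simp
    qed
    moreover have "g < q" unfolding g_def using q by simp
    ultimately have "g \<in> totatives q" by (auto simp: in_totatives_iff)
    moreover have "g mod d = x mod d"
      unfolding g_def g0_def using dq by (simp add: mod_mod_cancel)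
    ultimately show ?thesis by blast
  qed
qed

definition red :: "nat \<Rightarrow> nat \<Rightarrow> nat" where
  "red d h = (if h mod d = 0 then d else h mod d)"

lemma red_in_totatives:
  assumes "d dvd q" "q > 0" "h \<in> totatives q"
  shows "red d h \<in> totatives d"
proof -
  have d: "d > 0" using assms by (auto intro: Nat.gr0I)
  have hq: "coprime h q" using assms by (auto simp: in_totatives_iff)
  obtain e where "q = d * e" using assms(1) by blast
  then have "coprime h d" using hq by simp
  then have c: "coprime (h mod d) d" using d by simp
  show ?thesis
  proof (cases "h mod d = 0")
    case True
    then have "d = 1" using c by simp
    then show ?thesis by (simp add: red_def)
  next
    case False
    then show ?thesis using c d by (auto simp: red_def in_totatives_iff)
  qed
qed

lemma red_eq_iff:
  assumes "x \<in> totatives d"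
  shows "red d h = x \<longleftrightarrow> h mod d = x mod d"
proof -
  have x: "0 < x" "x \<le> d" using assms by (auto simp: in_totatives_iff)
  show ?thesis
  proof (cases "x = d")
    case True
    have "h mod d < d" using x by simp
    then show ?thesis using True by (auto simp: red_def)
  next
    case False
    then have "x < d" using x by simp
    then show ?thesis using x by (auto simp: red_def)
  qed
qed

lemma fibre_card_le:
  assumes dq: "d dvd q" and q: "q > 1" and x: "x \<in> totatives d" and y: "y \<in> totatives d"
  shows "card {h\<in>totatives q. h mod d = x mod d} \<le> card {h\<in>totatives q. h mod d = y mod d}"
proof -
  have cx: "coprime x d" and cy: "coprime y d" using x y by (auto simp: in_totatives_iff)
  obtain x' where x': "[x * x' = 1] (mod d)" using cong_solve_coprime_nat[OF cx] by auto
  have "coprime (x * x') d" using x' cong_imp_coprime[OF cong_sym[OF x']] by simp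
  then have cx': "coprime x' d" by simp
  have "coprime (y * x') d" using cy cx' by simp
  moreover have "q > 0" using q by simp
  ultimately obtain g where g: "g \<in> totatives q" "g mod d = (y * x') mod d"
    using lift_unit[OF dq] by blast
  have cg: "coprime g q" using g by (auto simp: in_totatives_iff)
  let ?f = "\<lambda>h. (g * h) mod q"
  show ?thesis
  proof (rule card_inj_on_le)
    show "inj_on ?f {h\<in>totatives q. h mod d = x mod d}"
    proof (rule inj_onI)
      fix h1 h2 assume h: "h1 \<in> {h\<in>totatives q. h mod d = x mod d}" "h2 \<in> {h\<in>totatives q. h mod d = x mod d}"
        and eq: "?f h1 = ?f h2"
      then have "[g * h1 = g * h2] (mod q)" by (simp add: cong_def)
      then have "[h1 = h2] (mod q)" using cong_mult_lcancel_nat[OF cg] by simp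
      moreover have "h1 < q" "h2 < q" using h q totatives_less by auto
      ultimately show "h1 = h2" by (simp add: cong_def)
    qed
  next
    show "?f ` {h\<in>totatives q. h mod d = x mod d} \<subseteq> {h\<in>totatives q. h mod d = y mod d}"
    proof safe
      fix h assume h: "h \<in> totatives q" "h mod d = x mod d"
      have "coprime (g * h) q" using cg h by (auto simp: in_totatives_iff)
      then have c: "coprime ((g * h) mod q) q" using q by simp
      have "(g * h) mod q \<noteq> 0"
      proof
        assume "(g * h) mod q = 0"
        then have "coprime 0 q" using c by simp
        then show False using q by simp
      qed
      then show "(g * h) mod q \<in> totatives q" using c q by (auto simp: in_totatives_iff)
      have "[g * h = (y * x') * x] (mod d)"
        using g(2) h(2) by (intro cong_mult) (auto simp: cong_def)
      also have "(y * x') * x = y * (x * x')" by simp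
      also have "[y * (x * x') = y * 1] (mod d)" using x' by (intro cong_mult cong_refl)
      finally have "[g * h = y] (mod d)" by simp
      then show "(g * h) mod q mod d = y mod d" using dq by (simp add: mod_mod_cancel cong_def)
    qed
  qed simp
qed

lemma sum_totatives_reduce:
  fixes f :: "nat \<Rightarrow> complex"
  assumes dq: "d dvd q" and q: "q > 0" and per: "\<And>h. f (h mod d) = f h"
  shows "(\<Sum>h\<in>totatives q. f h) = of_nat (totient q div totient d) * (\<Sum>h\<in>totatives d. f h)"
proof -
  have d: "d > 0" using dq q by (auto intro: Nat.gr0I)
  define c where "c = card {h\<in>totatives q. h mod d = 1 mod d}"
  have one: "1 \<in> totatives d" using d by simp
  have fib: "card {h\<in>totatives q. h mod d = x mod d} = c" if x: "x \<in> totatives d" for x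
  proof (cases "q = 1")
    case True
    then have "d = 1" using dq by simp
    then have "x = 1" using x by simp
    then show ?thesis by (simp add: c_def)
  next
    case False
    then have "q > 1" using q by simp
    then show ?thesis unfolding c_def
      using fibre_card_le[OF dq _ x one] fibre_card_le[OF dq _ one x] by simp
  qed
  have gen: "(\<Sum>h\<in>totatives q. g h) = of_nat c * (\<Sum>h\<in>totatives d. g h)"
    if perg: "\<And>h. g (h mod d) = g h" for g :: "nat \<Rightarrow> complex"
  proof -
    have "(\<Sum>h\<in>totatives q. g h) = (\<Sum>x\<in>totatives d. \<Sum>h\<in>{h\<in>totatives q. red d h = x}. g h)"
      by (rule sum.group[symmetric]) (auto intro: red_in_totatives[OF dq q])
    also have "\<dots> = (\<Sum>x\<in>totatives d. \<Sum>h\<in>{h\<in>totatives q. h mod d = x mod d}. g x)"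
    proof (intro sum.cong)
      fix x h assume x: "x \<in> totatives d" and h: "h \<in> {h\<in>totatives q. h mod d = x mod d}"
      have "g h = g (h mod d)" using perg by simp
      also have "\<dots> = g (x mod d)" using h by simp
      also have "\<dots> = g x" using perg by simp
      finally show "g h = g x" .
    next
      fix x assume "x \<in> totatives d"
      then show "{h\<in>totatives q. red d h = x} = {h\<in>totatives q. h mod d = x mod d}"
        using red_eq_iff by auto
    qed simp
    also have "\<dots> = (\<Sum>x\<in>totatives d. of_nat c * g x)"
      by (intro sum.cong refl) (simp add: fib)
    finally show ?thesis by (simp add: sum_distrib_left)
  qed
  have "of_nat (totient q) = (of_nat (c * totient d) :: complex)"
    using gen[of "\<lambda>_. 1"] by (simp add: totient_def)
  then have "totient q = c * totient d" by (simp only: of_nat_eq_iff)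
  then have "c = totient q div totient d" using d by simp
  then show ?thesis using gen[of f, OF per] by simp
qed

lemma W_reduce:
  assumes dq: "d dvd q" and q: "q > 0"
  shows "W k q (c * int (q div d)) = of_nat (totient q div totient d) * W k d c"
proof -
  have d: "d > 0" using dq q by (auto intro: Nat.gr0I)
  have "W k q (c * int (q div d)) = (\<Sum>h\<in>totatives q. e_q d (of_int (c * int h ^ k)))"
    unfolding W_alt
  proof (intro sum.cong refl)
    fix h
    obtain e where e: "q = d * e" using dq by blast
    then have e0: "e > 0" using q by simp
    have "q div d = e" using e d by simp
    then have "of_int (c * int (q div d) * int h ^ k) / real q = of_int (c * int h ^ k) / real d"
      using d e e0 by (simp add: field_simps)
    then show "e_q q (of_int (c * int (q div d) * int h ^ k)) = e_q d (of_int (c * int h ^ k))"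
      by (simp add: e_q_def)
  qed
  also have "\<dots> = of_nat (totient q div totient d) * (\<Sum>h\<in>totatives d. e_q d (of_int (c * int h ^ k)))"
  proof (rule sum_totatives_reduce[OF dq q])
    fix h
    have "[c * int (h mod d) ^ k = c * int h ^ k] (mod int d)"
      by (intro cong_mult cong_pow cong_refl) (simp add: cong_def zmod_int)
    then show "e_q d (of_int (c * int (h mod d) ^ k)) = e_q d (of_int (c * int h ^ k))"
      using e_q_cong[OF d] by blast
  qed
  also have "\<dots> = of_nat (totient q div totient d) * W k d c"
    unfolding W_alt ..
  finally show ?thesis .
qed

lemma div_div_self: "d dvd q \<Longrightarrow> q > 0 \<Longrightarrow> q div (q div d) = (d::nat)"
  by (auto elim!: dvdE)

lemma div_dvd_self': "d dvd q \<Longrightarrow> q div d dvd (q::nat)"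
  by (auto elim!: dvdE)

lemma grouping:
  assumes q: "q > 0"
  shows "of_nat q * of_nat (M k s a q) = of_nat (totient q) ^ s * (\<Sum>d\<in>{d. d dvd q}. T k s a d)"
proof -
  define G where "G r = (\<Prod>j\<in>{1..s}. W k q (a j * int r))" for r
  have fin: "finite {d. d dvd q}" using q by simp
  have "of_nat q * of_nat (M k s a q) = (\<Sum>r\<in>{1..q}. G r)"
    unfolding G_def by (rule counting_identity[OF q])
  also have "\<dots> = (\<Sum>g\<in>{d. d dvd q}. \<Sum>r\<in>{r\<in>{1..q}. gcd r q = g}. G r)"
    by (rule sum.group[symmetric]) (use fin in auto)
  also have "\<dots> = (\<Sum>g\<in>{d. d dvd q}. of_nat (totient q) ^ s * T k s a (q div g))"
  proof (intro sum.cong refl)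
    fix g assume g: "g \<in> {d. d dvd q}"
    then have gq: "g dvd q" by simp
    define d where "d = q div g"
    have dq: "d dvd q" unfolding d_def using gq by (rule div_dvd_self')
    have d0: "d > 0" unfolding d_def using gq q by (auto elim!: dvdE)
    have gd: "q div d = g" unfolding d_def by (rule div_div_self[OF gq q])
    have set_eq: "{r\<in>{1..q}. gcd r q = g} = {k\<in>{0<..q}. gcd k q = g}" by auto
    have "(\<Sum>r\<in>{r\<in>{1..q}. gcd r q = g}. G r) = (\<Sum>r'\<in>totatives (q div g). G (r' * g))"
      unfolding set_eq by (rule sum.reindex_bij_betw[symmetric]) (rule bij_betw_totatives_gcd_eq[OF gq q])
    also have "\<dots> = (\<Sum>r'\<in>totatives d. of_nat (totient q div totient d) ^ s * (\<Prod>j\<in>{1..s}. W k d (a j * int r')))"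
    proof (intro sum.cong refl)
      fix r'
      have "G (r' * g) = (\<Prod>j\<in>{1..s}. of_nat (totient q div totient d) * W k d (a j * int r'))"
        unfolding G_def
      proof (intro prod.cong refl)
        fix j
        have e: "a j * int (r' * g) = (a j * int r') * int (q div d)" using gd by simp
        show "W k q (a j * int (r' * g)) = of_nat (totient q div totient d) * W k d (a j * int r')"
          unfolding e by (rule W_reduce[OF dq q])
      qed
      also have "\<dots> = of_nat (totient q div totient d) ^ s * (\<Prod>j\<in>{1..s}. W k d (a j * int r'))"
        by (simp add: prod.distrib)
      finally show "G (r' * g) = of_nat (totient q div totient d) ^ s * (\<Prod>j\<in>{1..s}. W k d (a j * int r'))" .
    qed (simp add: d_def)
    also have "\<dots> = of_nat (totient q div totient d) ^ s * (\<Sum>r'\<in>totatives d. \<Prod>j\<in>{1..s}. W k d (a j * int r'))"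
      by (simp add: sum_distrib_left)
    also have "(\<Sum>r'\<in>totatives d. \<Prod>j\<in>{1..s}. W k d (a j * int r')) = of_nat (totient d) ^ s * T k s a d"
      unfolding T_alt using d0 by simp
    also have "of_nat (totient q div totient d) ^ s * (of_nat (totient d) ^ s * T k s a d)
        = (of_nat (totient q div totient d * totient d) :: complex) ^ s * T k s a d"
      by (simp add: power_mult_distrib)
    also have "totient q div totient d * totient d = totient q"
      using totient_dvd[OF dq] by simp
    finally show "(\<Sum>r\<in>{r\<in>{1..q}. gcd r q = g}. G r) = of_nat (totient q) ^ s * T k s a (q div g)"
      by (simp add: d_def)
  qed
  also have "\<dots> = of_nat (totient q) ^ s * (\<Sum>g\<in>{d. d dvd q}. T k s a (q div g))"
    by (simp add: sum_distrib_left)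
  also have "(\<Sum>g\<in>{d. d dvd q}. T k s a (q div g)) = (\<Sum>d\<in>{d. d dvd q}. T k s a d)"
    by (rule sum.reindex_bij_witness[of _ "\<lambda>g. q div g" "\<lambda>g. q div g"])
       (auto simp: div_div_self[OF _ q] div_dvd_self')
  finally show ?thesis .
qed

definition Fr :: "nat \<Rightarrow> nat \<Rightarrow> (nat \<Rightarrow> int) \<Rightarrow> nat \<Rightarrow> real" where
  "Fr k s a q = real q * real (M k s a q) / real (totient q) ^ s"

lemma Fr_divsum:
  assumes q: "q > 0"
  shows "complex_of_real (Fr k s a q) = (\<Sum>d\<in>{d. d dvd q}. T k s a d)"
proof -
  have t: "totient q > 0" using q by simp
  have "complex_of_real (Fr k s a q) = of_nat q * of_nat (M k s a q) / of_nat (totient q) ^ s"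
    by (simp add: Fr_def)
  also have "\<dots> = (\<Sum>d\<in>{d. d dvd q}. T k s a d)"
    using grouping[OF q, of k s a] t by (simp add: field_simps)
  finally show ?thesis .
qed

lemma chi_seq_Fr: "chi_seq k s a p n = Fr k s a (p ^ n)"
  unfolding chi_seq_def Fr_def by (simp add: field_simps)

lemma Fr_nonneg: "Fr k s a q \<ge> 0"
  unfolding Fr_def by simp

lemma W_Suc0 [simp]: "W k (Suc 0) c = 1"
  using W_1 by simp

lemma T_1: "T k s a 1 = 1"
  unfolding T_alt by simp

lemma NN_cong:
  assumes "\<And>j. j \<in> {1..s} \<Longrightarrow> [x j = y j] (mod q)"
  shows "[NN k s a x = NN k s a y] (mod int q)"
  unfolding NN_def
  by (intro cong_sum cong_mult cong_refl cong_pow) (use assms in \<open>simp add: cong_int_iff\<close>)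

lemma M_mult:
  assumes cop: "coprime m n" and m: "m > 0" and n: "n > 0"
  shows "M k s a (m * n) = M k s a m * M k s a n"
proof -
  define \<Phi> where "\<Phi> x = (restrict (\<lambda>j. x j mod m) {1..s}, restrict (\<lambda>j. x j mod n) {1..s})" for x :: "nat \<Rightarrow> nat"
  have inj: "inj_on \<Phi> (Aset k s a (m * n))"
  proof (rule inj_onI)
    fix x y assume x: "x \<in> Aset k s a (m * n)" and y: "y \<in> Aset k s a (m * n)" and eq: "\<Phi> x = \<Phi> y"
    show "x = y"
    proof (rule PiE_ext)
      show "x \<in> {1..s} \<rightarrow>\<^sub>E {0..<m*n}" "y \<in> {1..s} \<rightarrow>\<^sub>E {0..<m*n}" using x y by (auto simp: Aset_def)
      fix j assume j: "j \<in> {1..s}"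
      have "fst (\<Phi> x) j = fst (\<Phi> y) j" "snd (\<Phi> x) j = snd (\<Phi> y) j" using eq by simp_all
      then have "x j mod m = y j mod m" "x j mod n = y j mod n" using j by (simp_all add: \<Phi>_def)
      then have "[x j = y j] (mod m * n)" using cop by (intro coprime_cong_mult_nat) (auto simp: cong_def)
      moreover have "x j < m * n" "y j < m * n" using x y j by (auto simp: Aset_def PiE_iff)
      ultimately show "x j = y j" by (rule cong_less_modulus_unique_nat)
    qed
  qed
  have sub: "\<Phi> ` Aset k s a (m * n) \<subseteq> Aset k s a m \<times> Aset k s a n"
  proof
    fix z assume "z \<in> \<Phi> ` Aset k s a (m * n)"
    then obtain x where x: "x \<in> Aset k s a (m * n)" and z: "z = \<Phi> x" by auto
    have xP: "x \<in> {1..s} \<rightarrow>\<^sub>E {0..<m*n}" and xc: "\<And>j. j \<in> {1..s} \<Longrightarrow> coprime (x j) (m * n)"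
      and xd: "int (m * n) dvd NN k s a x" using x by (auto simp: Aset_def)
    have part: "restrict (\<lambda>j. x j mod q) {1..s} \<in> Aset k s a q" if qq: "q > 0" "q dvd m * n" for q
    proof -
      have "restrict (\<lambda>j. x j mod q) {1..s} \<in> {1..s} \<rightarrow>\<^sub>E {0..<q}" using qq by auto
      moreover have "coprime (restrict (\<lambda>j. x j mod q) {1..s} j) q" if j: "j \<in> {1..s}" for j
      proof -
        obtain e where "m * n = q * e" using qq by blast
        then have "coprime (x j) q" using xc[OF j] by simp
        then show ?thesis using j qq by simp
      qed
      moreover have "int q dvd NN k s a (restrict (\<lambda>j. x j mod q) {1..s})"
      proof -
        have "[NN k s a (restrict (\<lambda>j. x j mod q) {1..s}) = NN k s a x] (mod int q)"
          by (rule NN_cong) (simp add: cong_def)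
        moreover have "int q dvd NN k s a x" using xd qq(2) by (meson dvd_trans int_dvd_int_iff)
        ultimately show ?thesis by (simp add: cong_dvd_iff)
      qed
      ultimately show ?thesis by (auto simp: Aset_def)
    qed
    show "z \<in> Aset k s a m \<times> Aset k s a n"
      unfolding z \<Phi>_def using part[OF m] part[OF n] by auto
  qed
  have sup: "Aset k s a m \<times> Aset k s a n \<subseteq> \<Phi> ` Aset k s a (m * n)"
  proof
    fix uv assume uv: "uv \<in> Aset k s a m \<times> Aset k s a n"
    obtain u v where uv_eq: "uv = (u, v)" and u: "u \<in> Aset k s a m" and v: "v \<in> Aset k s a n"
      using uv by auto
    define z where "z j = (THE z. z < m * n \<and> [z = u j] (mod m) \<and> [z = v j] (mod n))" for j
    have zP: "z j < m * n \<and> [z j = u j] (mod m) \<and> [z j = v j] (mod n)" for j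
      unfolding z_def by (rule theI') (rule binary_chinese_remainder_unique_nat[OF cop], use m n in auto)
    define x where "x = restrict z {1..s}"
    have uP: "u \<in> {1..s} \<rightarrow>\<^sub>E {0..<m}" and uc: "\<And>j. j \<in> {1..s} \<Longrightarrow> coprime (u j) m"
      and ud: "int m dvd NN k s a u" using u by (auto simp: Aset_def)
    have vP: "v \<in> {1..s} \<rightarrow>\<^sub>E {0..<n}" and vc: "\<And>j. j \<in> {1..s} \<Longrightarrow> coprime (v j) n"
      and vd: "int n dvd NN k s a v" using v by (auto simp: Aset_def)
    have xm: "x j mod m = u j" if j: "j \<in> {1..s}" for j
    proof -
      have "u j < m" using uP j by auto
      then show ?thesis using zP[of j] j unfolding x_def by (simp add: cong_def)
    qed
    have xn: "x j mod n = v j" if j: "j \<in> {1..s}" for j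
    proof -
      have "v j < n" using vP j by auto
      then show ?thesis using zP[of j] j unfolding x_def by (simp add: cong_def)
    qed
    have "x \<in> Aset k s a (m * n)"
    proof -
      have "x \<in> {1..s} \<rightarrow>\<^sub>E {0..<m*n}" unfolding x_def using zP by auto
      moreover have "coprime (x j) (m * n)" if j: "j \<in> {1..s}" for j
      proof -
        have "coprime (x j mod m) m" using xm[OF j] uc[OF j] by simp
        then have "coprime (x j) m" using m by simp
        moreover have "coprime (x j mod n) n" using xn[OF j] vc[OF j] by simp
        then have "coprime (x j) n" using n by simp
        ultimately show ?thesis by simp
      qed
      moreover have "int (m * n) dvd NN k s a x"
      proof -
        have "[NN k s a x = NN k s a u] (mod int m)"
          by (rule NN_cong) (use uP in \<open>auto simp: cong_def xm PiE_iff\<close>)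
        then have "int m dvd NN k s a x" using ud by (simp add: cong_dvd_iff)
        moreover have "[NN k s a x = NN k s a v] (mod int n)"
          by (rule NN_cong) (use vP in \<open>auto simp: cong_def xn PiE_iff\<close>)
        then have "int n dvd NN k s a x" using vd by (simp add: cong_dvd_iff)
        moreover have "coprime (int m) (int n)" using cop by simp
        ultimately show ?thesis by (simp add: divides_mult)
      qed
      ultimately show ?thesis by (auto simp: Aset_def)
    qed
    moreover have "\<Phi> x = (u, v)"
    proof -
      have "restrict (\<lambda>j. x j mod m) {1..s} = u"
        by (rule PiE_ext[OF _ uP]) (use uP in \<open>auto simp: xm PiE_iff\<close>)
      moreover have "restrict (\<lambda>j. x j mod n) {1..s} = v"
        by (rule PiE_ext[OF _ vP]) (use vP in \<open>auto simp: xn PiE_iff\<close>)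
      ultimately show ?thesis by (simp add: \<Phi>_def)
    qed
    ultimately show "uv \<in> \<Phi> ` Aset k s a (m * n)" using uv_eq by (intro rev_image_eqI[of x]) auto
  qed
  have "bij_betw \<Phi> (Aset k s a (m * n)) (Aset k s a m \<times> Aset k s a n)"
    unfolding bij_betw_def using inj sub sup by blast
  then have "card (Aset k s a (m * n)) = card (Aset k s a m \<times> Aset k s a n)"
    by (rule bij_betw_same_card)
  then show ?thesis by (simp add: M_Aset card_cartesian_product)
qed

lemma Fr_mult:
  assumes cop: "coprime m n" and m: "m > 0" and n: "n > 0"
  shows "Fr k s a (m * n) = Fr k s a m * Fr k s a n"
  unfolding Fr_def M_mult[OF assms] totient_mult_coprime[OF cop]
  by (simp add: power_mult_distrib field_simps)

lemma Fr_1: "Fr k s a 1 = 1"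
  using Fr_divsum[of 1 k s a] T_1[of k s a] by simp

lemma binom_cong_int:
  fixes a b :: int
  shows "b^2 dvd (a + b) ^ Suc k - a ^ Suc k - of_nat (Suc k) * a ^ k * b"
proof (induction k)
  case 0 then show ?case by simp
next
  case (Suc k)
  then obtain X where X: "(a + b) ^ Suc k - a ^ Suc k - of_nat (Suc k) * a ^ k * b = b^2 * X"
    by (elim dvdE)
  have e: "(a + b) ^ Suc k = a ^ Suc k + of_nat (Suc k) * a ^ k * b + b^2 * X"
    using X by (simp add: algebra_simps)
  have "(a + b) ^ Suc (Suc k) = (a + b) * (a + b) ^ Suc k" by simp
  also have "\<dots> = (a + b) * (a ^ Suc k + of_nat (Suc k) * a ^ k * b + b^2 * X)" by (simp only: e)
  finally have "(a + b) ^ Suc (Suc k) - a ^ Suc (Suc k) - of_nat (Suc (Suc k)) * a ^ Suc k * b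
        = b^2 * (of_nat (Suc k) * a ^ k + (a + b) * X)"
    by (simp add: algebra_simps power2_eq_square)
  then show ?case by simp
qed

lemma coprime_prime_right_iff: "prime p \<Longrightarrow> coprime h p \<longleftrightarrow> \<not> p dvd (h::nat)"
proof
  assume p: "prime p" and c: "coprime h p"
  show "\<not> p dvd h"
  proof
    assume "p dvd h"
    then have "is_unit p" using c by (meson coprime_common_divisor dvd_refl)
    then show False using p by (simp add: not_prime_unit)
  qed
next
  assume p: "prime p" and nd: "\<not> p dvd h"
  have "coprime p h" using prime_imp_coprime[OF p nd] .
  then show "coprime h p" by (rule coprime_commute[THEN iffD1])
qed

lemma tot_pp:
  assumes p: "prime p" and m: "m > 0"
  shows "h \<in> totatives (p ^ m) \<longleftrightarrow> 0 < h \<and> h \<le> p ^ m \<and> \<not> p dvd h"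
  using coprime_prime_right_iff[OF p, of h] m by (auto simp: in_totatives_iff)

lemma not_unit_prime: "prime p \<Longrightarrow> \<not> is_unit p"
  by (simp add: not_prime_unit)

lemma e_q_split:
  assumes p: "p > 0" and t: "t \<ge> 1"
  shows "e_q (p ^ t) (of_int (X + int (p ^ (t - 1)) * Y)) = e_q (p ^ t) (of_int X) * e_q p (of_int Y)"
proof -
  have "real (p ^ t) = real p * real (p ^ (t - 1))"
    using t by (metis Suc_diff_le diff_Suc_1 le_add_diff_inverse of_nat_mult power_Suc)
  then have "of_int (int (p ^ (t - 1)) * Y) / real (p ^ t) = of_int Y / real p"
    using p by (simp add: field_simps)
  then show ?thesis unfolding e_q_def by (simp add: add_divide_distrib e_add)
qed

lemma W_vanish:
  assumes p: "prime p" and k: "k > 0" and t: "t \<ge> 2 * multiplicity p k + 2"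
      and c: "\<not> int p dvd c"
  shows "W k (p ^ t) c = 0"
proof -
  define v where "v = multiplicity p k"
  define m where "m = t - v - 1"
  have m1: "m \<ge> 1" and tm: "t = m + (v + 1)" and m2: "t \<le> 2 * m"
    using t by (auto simp: m_def v_def)
  have p1: "p > 1" using p by (rule prime_gt_1_nat)
  then have p0: "p > 0" by simp
  obtain k' where kk: "k = p ^ v * k'" and k': "\<not> p dvd k'"
    using multiplicity_decompose'[of k p] k not_unit_prime[OF p] unfolding v_def by auto
  define P where "P = p ^ m"
  define Q where "Q = p ^ (v + 1)"
  have PQ: "p ^ t = P * Q" unfolding P_def Q_def tm by (simp add: power_add)
  have P0: "P > 0" and Q0: "Q > 0" using p0 by (auto simp: P_def Q_def)
  have pP: "p dvd P" using m1 by (simp add: P_def dvd_power)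
  have pQ: "p dvd Q" by (simp add: Q_def)
  have t1: "t \<ge> 1" using tm by simp
  define f where "f = (\<lambda>(h0, u). h0 + P * u)"
  define g where "g = (\<lambda>h. (h mod P, h div P))"
  have bij: "bij_betw f (totatives P \<times> {..<Q}) (totatives (p ^ t))"
  proof (rule bij_betwI[where g = g])
    show "f \<in> totatives P \<times> {..<Q} \<rightarrow> totatives (p ^ t)"
    proof
      fix x assume x: "x \<in> totatives P \<times> {..<Q}"
      obtain h0 u where xe: "x = (h0, u)" by fastforce
      have h0: "0 < h0" "h0 \<le> P" "\<not> p dvd h0" and u: "u < Q"
        using x tot_pp[OF p, of m] m1 unfolding xe P_def by auto
      have "h0 + P * u \<le> P + P * (Q - 1)" using h0 u by (intro add_mono mult_le_mono) auto
      also have "\<dots> = P * Q" using Q0 by (simp add: algebra_simps)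
      finally have le: "h0 + P * u \<le> p ^ t" using PQ by simp
      have "\<not> p dvd h0 + P * u" using h0(3) pP by (simp add: dvd_add_left_iff)
      then show "f x \<in> totatives (p ^ t)" using le h0 tot_pp[OF p, of t] t1 unfolding xe f_def by auto
    qed
    show "g \<in> totatives (p ^ t) \<rightarrow> totatives P \<times> {..<Q}"
    proof
      fix h assume h: "h \<in> totatives (p ^ t)"
      then have h1: "0 < h" "h \<le> P * Q" "\<not> p dvd h" using tot_pp[OF p, of t] t1 PQ by auto
      have "\<not> p dvd h mod P"
      proof
        assume "p dvd h mod P"
        then have "p dvd h mod P + P * (h div P)" using pP by (intro dvd_add dvd_mult2)
        then show False using h1 by simp
      qed
      moreover have "h mod P \<noteq> 0"
      proof
        assume "h mod P = 0"
        then show False using \<open>\<not> p dvd h mod P\<close> by simp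
      qed
      moreover have "h mod P \<le> P" using P0 by (simp add: less_imp_le)
      moreover have "h \<noteq> P * Q" using h1 pP by auto
      then have "h < P * Q" using h1 by simp
      then have "h div P < Q" using P0 by (simp add: div_less_iff_less_mult mult.commute)
      ultimately show "g h \<in> totatives P \<times> {..<Q}"
        unfolding g_def P_def using tot_pp[OF p, of m] m1 by auto
    qed
    fix x assume x: "x \<in> totatives P \<times> {..<Q}"
    obtain h0 u where xe: "x = (h0, u)" by fastforce
    have h0: "0 < h0" "h0 \<le> P" "\<not> p dvd h0"
      using x tot_pp[OF p, of m] m1 unfolding xe P_def by auto
    have "h0 \<noteq> P" using h0 pP by auto
    then have "h0 < P" using h0 by simp
    then show "g (f x) = x" unfolding xe f_def g_def by simp
  next
    fix y show "f (g y) = y" unfolding f_def g_def by simp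
  qed
  have inner: "e_q (p ^ t) (of_int (c * int (h0 + P * u) ^ k)) =
      e_q (p ^ t) (of_int (c * int h0 ^ k)) * e_q p (of_int (int u * (c * int k' * int h0 ^ (k - 1))))"
    for h0 u
  proof -
    have "(int P * int u)^2 dvd (int h0 + int P * int u) ^ Suc (k - 1) - int h0 ^ Suc (k - 1)
             - of_nat (Suc (k - 1)) * int h0 ^ (k - 1) * (int P * int u)"
      by (rule binom_cong_int)
    then have "(int P * int u)^2 dvd (int h0 + int P * int u) ^ k - int h0 ^ k - int k * int h0 ^ (k - 1) * (int P * int u)"
      using k by simp
    moreover have "int (p ^ t) dvd (int P * int u)^2"
    proof -
      have "p ^ t dvd P ^ 2" unfolding P_def using m2 by (simp add: power_mult[symmetric] le_imp_power_dvd mult.commute)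
      then have "int (p ^ t) dvd int P ^ 2" by (metis of_nat_dvd_iff of_nat_power)
      then show ?thesis by (simp add: power_mult_distrib)
    qed
    ultimately have d: "int (p ^ t) dvd (int h0 + int P * int u) ^ k - int h0 ^ k - int k * int h0 ^ (k - 1) * (int P * int u)"
      using dvd_trans by blast
    have kP: "int k * int P = int (p ^ (t - 1)) * int k'"
    proof -
      have "k * P = p ^ (v + m) * k'" unfolding kk P_def by (simp add: power_add)
      also have "v + m = t - 1" using tm by simp
      finally show ?thesis by (metis of_nat_mult mult.commute)
    qed
    have "[c * int (h0 + P * u) ^ k = c * (int h0 ^ k + int k * int h0 ^ (k - 1) * (int P * int u))] (mod int (p ^ t))"
      by (intro cong_mult cong_refl) (use d in \<open>simp add: cong_iff_dvd_diff algebra_simps\<close>)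
    moreover have "c * (int h0 ^ k + int k * int h0 ^ (k - 1) * (int P * int u)) =
        c * int h0 ^ k + int (p ^ (t - 1)) * (int u * (c * int k' * int h0 ^ (k - 1)))"
    proof -
      have "int k * int h0 ^ (k - 1) * (int P * int u) = (int k * int P) * (int u * int h0 ^ (k - 1))" by (simp add: algebra_simps)
      also have "\<dots> = int (p ^ (t - 1)) * int k' * (int u * int h0 ^ (k - 1))" by (simp only: kP)
      finally show ?thesis by (simp add: algebra_simps)
    qed
    ultimately have "[c * int (h0 + P * u) ^ k = c * int h0 ^ k + int (p ^ (t - 1)) * (int u * (c * int k' * int h0 ^ (k - 1)))] (mod int (p ^ t))"
      by simp
    then have "e_q (p ^ t) (of_int (c * int (h0 + P * u) ^ k)) =
        e_q (p ^ t) (of_int (c * int h0 ^ k + int (p ^ (t - 1)) * (int u * (c * int k' * int h0 ^ (k - 1)))))"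
      by (rule e_q_cong[rotated]) (use p0 in simp)
    also have "\<dots> = e_q (p ^ t) (of_int (c * int h0 ^ k)) * e_q p (of_int (int u * (c * int k' * int h0 ^ (k - 1))))"
      by (rule e_q_split[OF p0 t1])
    finally show ?thesis .
  qed
  have "W k (p ^ t) c = (\<Sum>h\<in>totatives (p ^ t). e_q (p ^ t) (of_int (c * int h ^ k)))"
    by (rule W_alt)
  also have "\<dots> = (\<Sum>x\<in>totatives P \<times> {..<Q}. e_q (p ^ t) (of_int (c * int (f x) ^ k)))"
    by (rule sum.reindex_bij_betw[symmetric, OF bij])
  also have "\<dots> = (\<Sum>h0\<in>totatives P. \<Sum>u<Q. e_q (p ^ t) (of_int (c * int (h0 + P * u) ^ k)))"
    unfolding f_def by (simp add: sum.cartesian_product split_def)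
  also have "\<dots> = (\<Sum>h0\<in>totatives P. e_q (p ^ t) (of_int (c * int h0 ^ k)) *
                    (\<Sum>u<Q. e_q p (of_int (int u * (c * int k' * int h0 ^ (k - 1))))))"
    by (simp only: inner sum_distrib_left)
  also have "\<dots> = 0"
  proof (intro sum.neutral ballI)
    fix h0 assume h0: "h0 \<in> totatives P"
    then have "\<not> p dvd h0" using tot_pp[OF p, of m] m1 unfolding P_def by auto
    have ip: "prime (int p)" using p by simp
    have h0': "\<not> int p dvd int h0 ^ (k - 1)"
    proof
      assume "int p dvd int h0 ^ (k - 1)"
      then have "int p dvd int h0" using prime_dvd_power[OF ip] by blast
      then show False using \<open>\<not> p dvd h0\<close> by simp
    qed
    have nd: "\<not> int p dvd c * int k' * int h0 ^ (k - 1)"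
      using c k' h0' ip by (simp add: prime_dvd_mult_iff)
    have g: "(\<Sum>u<Q. e_q p (of_int (int u * (c * int k' * int h0 ^ (k - 1))))) =
        (if int p dvd (c * int k' * int h0 ^ (k - 1)) then of_nat Q else 0)"
      by (rule e_q_sum_geom[OF p0 Q0 pQ])
    then have "(\<Sum>u<Q. e_q p (of_int (int u * (c * int k' * int h0 ^ (k - 1))))) = 0"
      unfolding if_not_P[OF nd] .
    then show "e_q (p ^ t) (of_int (c * int h0 ^ k)) *
        (\<Sum>u<Q. e_q p (of_int (int u * (c * int k' * int h0 ^ (k - 1))))) = 0" by simp
  qed
  finally show ?thesis .
qed

definition Lp :: "nat \<Rightarrow> (nat \<Rightarrow> int) \<Rightarrow> nat \<Rightarrow> nat" where
  "Lp k a p = 2 * multiplicity p k + 2 + multiplicity (int p) (a 1)"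

lemma T_vanish:
  assumes p: "prime p" and k: "k > 0" and s: "s \<ge> 1" and a1: "a 1 \<noteq> 0" and t: "t \<ge> Lp k a p"
  shows "T k s a (p ^ t) = 0"
proof -
  define w where "w = multiplicity (int p) (a 1)"
  have ip: "prime (int p)" using p by simp
  obtain a' where aa: "a 1 = int p ^ w * a'" and a': "\<not> int p dvd a'"
    using multiplicity_decompose'[of "a 1" "int p"] a1 not_unit_prime[OF ip] unfolding w_def by auto
  have p0: "p > 0" using p by (simp add: prime_gt_0_nat)
  have wt: "w \<le> t" and t2: "t - w \<ge> 2 * multiplicity p k + 2" and t1: "t > 0"
    using t by (auto simp: Lp_def w_def)
  have zero: "W k (p ^ t) (a 1 * int r) = 0" if r: "r \<in> totatives (p ^ t)" for r
  proof -
    have "\<not> p dvd r" using r tot_pp[OF p t1] by auto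
    then have "\<not> int p dvd int r" by simp
    then have nd: "\<not> int p dvd a' * int r" using a' ip by (simp add: prime_dvd_mult_iff)
    have dq: "p ^ (t - w) dvd p ^ t" using wt by (simp add: le_imp_power_dvd)
    have pt: "p ^ t = p ^ (t - w) * p ^ w" using wt by (simp add: power_add[symmetric])
    have "p ^ t div p ^ (t - w) = p ^ w" unfolding pt using p0 by simp
    then have e: "a 1 * int r = (a' * int r) * int (p ^ t div p ^ (t - w))"
      unfolding aa by (simp add: algebra_simps)
    have "W k (p ^ t) (a 1 * int r) = of_nat (totient (p ^ t) div totient (p ^ (t - w))) * W k (p ^ (t - w)) (a' * int r)"
      unfolding e by (rule W_reduce[OF dq]) (use p0 in simp)
    also have "W k (p ^ (t - w)) (a' * int r) = 0"
      by (rule W_vanish[OF p k t2 nd])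
    finally show ?thesis by simp
  qed
  have prodz: "(\<Prod>j\<in>{1..s}. W k (p ^ t) (a j * int r)) = 0" if r: "r \<in> totatives (p ^ t)" for r
    using zero[OF r] s by (intro prod_zero) auto
  have "(\<Sum>r\<in>totatives (p ^ t). \<Prod>j\<in>{1..s}. W k (p ^ t) (a j * int r)) = 0"
    using prodz by (intro sum.neutral) blast
  then show ?thesis unfolding T_alt by (simp only: mult_zero_right)
qed

lemma divisors_pp:
  assumes p: "prime (p::nat)"
  shows "{d. d dvd p ^ n} = (\<lambda>i. p ^ i) ` {..n}"
  using divides_primepow_nat[OF p] by auto

lemma Fr_pp:
  assumes p: "prime p"
  shows "complex_of_real (Fr k s a (p ^ n)) = (\<Sum>i\<le>n. T k s a (p ^ i))"
proof -
  have p1: "p > 1" using p by (rule prime_gt_1_nat)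
  have "complex_of_real (Fr k s a (p ^ n)) = (\<Sum>d\<in>{d. d dvd p ^ n}. T k s a d)"
    by (rule Fr_divsum) (use p1 in simp)
  also have "\<dots> = (\<Sum>d\<in>(\<lambda>i. p ^ i) ` {..n}. T k s a d)" unfolding divisors_pp[OF p] ..
  also have "\<dots> = (\<Sum>i\<le>n. T k s a (p ^ i))"
    by (rule sum.reindex_cong[where l = "\<lambda>i. p ^ i"]) (use p1 in \<open>auto simp: inj_on_def\<close>)
  finally show ?thesis .
qed

lemma Fr_pp_stable:
  assumes p: "prime p" and k: "k > 0" and s: "s \<ge> 1" and a1: "a 1 \<noteq> 0" and n: "n \<ge> Lp k a p"
  shows "Fr k s a (p ^ n) = Fr k s a (p ^ Lp k a p)"
proof -
  have "complex_of_real (Fr k s a (p ^ n)) = (\<Sum>i\<le>n. T k s a (p ^ i))" by (rule Fr_pp[OF p])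
  also have "\<dots> = (\<Sum>i\<le>Lp k a p. T k s a (p ^ i))"
  proof (rule sum.mono_neutral_right)
    show "\<forall>i\<in>{..n} - {..Lp k a p}. T k s a (p ^ i) = 0"
      using T_vanish[of p k s a, OF p k s a1] by auto
  qed (use n in auto)
  also have "\<dots> = complex_of_real (Fr k s a (p ^ Lp k a p))" by (rule Fr_pp[OF p, symmetric])
  finally show ?thesis by simp
qed

lemma chi_props:
  assumes p: "prime p" and k: "k > 0" and s: "s \<ge> 1" and a1: "a 1 \<noteq> 0"
  shows "chi_seq k s a p \<longlonglongrightarrow> Fr k s a (p ^ Lp k a p)"
    and "convergent (chi_seq k s a p)"
    and "chi k s a p = Fr k s a (p ^ Lp k a p)"
proof -
  have ev: "\<forall>\<^sub>F n in sequentially. chi_seq k s a p n = Fr k s a (p ^ Lp k a p)"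
    unfolding chi_seq_Fr
    by (intro eventually_sequentiallyI[of "Lp k a p"]) (erule Fr_pp_stable[of p k s a, OF p k s a1])
  show l: "chi_seq k s a p \<longlonglongrightarrow> Fr k s a (p ^ Lp k a p)"
    by (rule tendsto_eventually[OF ev])
  then show "convergent (chi_seq k s a p)" by (rule convergentI)
  show "chi k s a p = Fr k s a (p ^ Lp k a p)"
    unfolding chi_def using l by (rule limI)
qed

lemma chi_complex:
  assumes p: "prime p" and k: "k > 0" and s: "s \<ge> 1" and a1: "a 1 \<noteq> 0"
  shows "complex_of_real (chi k s a p) = (\<Sum>i\<le>Lp k a p. T k s a (p ^ i))"
  using chi_props(3)[of p k s a, OF assms] Fr_pp[OF p] by simp

lemma chi_nonneg:
  assumes p: "prime p" and k: "k > 0" and s: "s \<ge> 1" and a1: "a 1 \<noteq> 0"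
  shows "chi k s a p \<ge> 0"
  using chi_props(3)[of p k s a, OF assms] Fr_nonneg by simp

lemma cnj_e_q: "cnj (e_q q x) = e_q q (- x)"
  by (simp add: e_q_def cnj_e)

definition Pairs :: "nat \<Rightarrow> nat \<Rightarrow> (nat \<times> nat) set" where
  "Pairs k q = {xy \<in> totatives q \<times> totatives q. int q dvd int (fst xy) ^ k - int (snd xy) ^ k}"

lemma parseval:
  assumes q: "q > 0"
  shows "(\<Sum>r\<in>{1..q}. (cmod (W k q (int r)))^2) = real q * real (card (Pairs k q))" (is "?L = ?R")
proof -
  let ?A = "totatives q \<times> totatives q"
  have eq1: "W k q (int r) * cnj (W k q (int r)) =
      (\<Sum>xy\<in>?A. e_q q (of_int (int r * (int (fst xy) ^ k - int (snd xy) ^ k))))" for r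
  proof -
    have "W k q (int r) * cnj (W k q (int r)) =
        (\<Sum>x\<in>totatives q. e_q q (of_int (int r * int x ^ k))) * (\<Sum>y\<in>totatives q. e_q q (- of_int (int r * int y ^ k)))"
      unfolding W_alt by (simp add: cnj_e_q)
    also have "\<dots> = (\<Sum>x\<in>totatives q. \<Sum>y\<in>totatives q. e_q q (of_int (int r * int x ^ k)) * e_q q (- of_int (int r * int y ^ k)))"
      by (rule sum_product)
    also have "\<dots> = (\<Sum>x\<in>totatives q. \<Sum>y\<in>totatives q. e_q q (of_int (int r * (int x ^ k - int y ^ k))))"
      by (intro sum.cong refl) (simp add: e_q_add[symmetric] algebra_simps)
    also have "\<dots> = (\<Sum>xy\<in>?A. e_q q (of_int (int r * (int (fst xy) ^ k - int (snd xy) ^ k))))"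
      by (simp add: sum.cartesian_product split_def)
    finally show ?thesis .
  qed
  have "complex_of_real (\<Sum>r\<in>{1..q}. (cmod (W k q (int r)))^2) = (\<Sum>r\<in>{1..q}. W k q (int r) * cnj (W k q (int r)))"
    by (simp only: of_real_sum complex_norm_square)
  also have "\<dots> = (\<Sum>r\<in>{1..q}. \<Sum>xy\<in>?A. e_q q (of_int (int r * (int (fst xy) ^ k - int (snd xy) ^ k))))"
    by (simp only: eq1)
  also have "\<dots> = (\<Sum>xy\<in>?A. \<Sum>r\<in>{1..q}. e_q q (of_int (int r * (int (fst xy) ^ k - int (snd xy) ^ k))))"
    by (rule sum.swap)
  also have "\<dots> = (\<Sum>xy\<in>?A. if int q dvd (int (fst xy) ^ k - int (snd xy) ^ k) then of_nat q else 0)"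
    by (intro sum.cong refl e_q_sum_geom1[OF q])
  also have "\<dots> = of_nat q * of_nat (card (Pairs k q))"
    unfolding Pairs_def by (simp add: sum.If_cases Int_def conj_commute)
  finally have h: "complex_of_real ?L = of_nat q * of_nat (card (Pairs k q))" .
  have "complex_of_real ?L = complex_of_real ?R" unfolding h by simp
  then show ?thesis by (simp only: of_real_eq_iff)
qed

lemma roots_bound_tot:
  assumes p: "prime p"
  shows "card {y \<in> totatives p. int p dvd int x ^ k - int y ^ k} \<le> k \<or> k = 0"
proof (cases "k = 0")
  case False
  have "{y \<in> totatives p. int p dvd int x ^ k - int y ^ k} \<subseteq> {y\<in>{..<p}. [y ^ k = x ^ k] (mod p)}"
  proof
    fix y assume y: "y \<in> {y \<in> totatives p. int p dvd int x ^ k - int y ^ k}"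
    then have "y < p" using p totatives_less[of y p] prime_gt_1_nat[OF p] by auto
    moreover have "[int x ^ k = int y ^ k] (mod int p)" using y by (simp add: cong_iff_dvd_diff)
    then have "[int y ^ k = int x ^ k] (mod int p)" by (rule cong_sym)
    then have "[y ^ k = x ^ k] (mod p)" by (metis cong_int_iff of_nat_power)
    ultimately show "y \<in> {y\<in>{..<p}. [y ^ k = x ^ k] (mod p)}" by simp
  qed
  then have "card {y \<in> totatives p. int p dvd int x ^ k - int y ^ k} \<le> card {y\<in>{..<p}. [y ^ k = x ^ k] (mod p)}"
    by (intro card_mono) auto
  also have "\<dots> \<le> k" using roots_mod_prime_bound[OF p, of k "x ^ k"] False by simp
  finally show ?thesis by simp
qed simp

lemma card_Pairs:
  assumes p: "prime p" and k: "k > 0"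
  shows "card (Pairs k p) \<le> (p - 1) * k"
proof -
  have "Pairs k p = Sigma (totatives p) (\<lambda>x. {y \<in> totatives p. int p dvd int x ^ k - int y ^ k})"
    unfolding Pairs_def by auto
  then have "card (Pairs k p) = (\<Sum>x\<in>totatives p. card {y \<in> totatives p. int p dvd int x ^ k - int y ^ k})"
    by (simp add: card_SigmaI)
  also have "\<dots> \<le> (\<Sum>x\<in>totatives p. k)"
    using roots_bound_tot[OF p] k by (intro sum_mono) auto
  also have "\<dots> = (p - 1) * k" using totient_prime[OF p] by (simp add: totient_def)
  finally show ?thesis .
qed

lemma W_invariant:
  assumes q: "q > 0" and t: "coprime t q"
  shows "W k q (c * int t ^ k) = W k q c"
proof (cases "q = 1")
  case True then show ?thesis by simp
next
  case False
  then have q1: "q > 1" using q by simp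
  define f where "f h = (t * h) mod q" for h
  have inj: "inj_on f (totatives q)"
  proof (rule inj_onI)
    fix h1 h2 assume h: "h1 \<in> totatives q" "h2 \<in> totatives q" and eq: "f h1 = f h2"
    then have "[t * h1 = t * h2] (mod q)" by (simp add: cong_def f_def)
    then have "[h1 = h2] (mod q)" using cong_mult_lcancel_nat[OF t] by simp
    moreover have "h1 < q" "h2 < q" using h q1 totatives_less by auto
    ultimately show "h1 = h2" by (simp add: cong_def)
  qed
  have sub: "f ` totatives q \<subseteq> totatives q"
  proof
    fix z assume "z \<in> f ` totatives q"
    then obtain h where h: "h \<in> totatives q" and z: "z = f h" by auto
    have "coprime (t * h) q" using t h by (auto simp: in_totatives_iff)
    then have c: "coprime ((t * h) mod q) q" using q by simp
    have "(t * h) mod q \<noteq> 0"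
    proof
      assume "(t * h) mod q = 0"
      then have "coprime 0 q" using c by simp
      then show False using q1 by simp
    qed
    then show "z \<in> totatives q" using c q unfolding z f_def by (auto simp: in_totatives_iff)
  qed
  have img: "f ` totatives q = totatives q" by (rule endo_inj_surj[OF finite_totatives sub inj])
  have "W k q c = (\<Sum>h\<in>f ` totatives q. e_q q (of_int (c * int h ^ k)))" unfolding W_alt img ..
  also have "\<dots> = (\<Sum>h\<in>totatives q. e_q q (of_int (c * int (f h) ^ k)))"
    using sum.reindex[OF inj, of "\<lambda>h. e_q q (of_int (c * int h ^ k))"] by (simp add: comp_def)
  also have "\<dots> = (\<Sum>h\<in>totatives q. e_q q (of_int (c * int t ^ k * int h ^ k)))"
  proof (intro sum.cong refl)
    fix h
    have "[c * int (f h) ^ k = c * int t ^ k * int h ^ k] (mod int q)"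
    proof -
      have "[int (f h) = int t * int h] (mod int q)" unfolding f_def
        by (simp add: cong_def zmod_int of_nat_mult)
      then have "[int (f h) ^ k = (int t * int h) ^ k] (mod int q)" by (rule cong_pow)
      then have "[c * int (f h) ^ k = c * (int t * int h) ^ k] (mod int q)" by (rule cong_scalar_left)
      then show ?thesis by (simp add: power_mult_distrib algebra_simps)
    qed
    then show "e_q q (of_int (c * int (f h) ^ k)) = e_q q (of_int (c * int t ^ k * int h ^ k))"
      by (rule e_q_cong[rotated]) (use q in simp)
  qed
  also have "\<dots> = W k q (c * int t ^ k)" unfolding W_alt ..
  finally show ?thesis ..
qed

lemma W_bound:
  assumes p: "prime p" and k: "k > 0" and c: "\<not> int p dvd c"
  shows "cmod (W k p c) \<le> real k * sqrt (real p)"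
proof -
  have p1: "p > 1" using p by (rule prime_gt_1_nat)
  then have p0: "p > 0" by simp
  have ip: "prime (int p)" using p by simp
  define A where "A = totatives p"
  define \<phi> where "\<phi> t = nat ((c * int t ^ k) mod int p)" for t
  define R where "R = \<phi> ` A"
  have tA: "\<not> p dvd t" "coprime t p" if "t \<in> A" for t
    using that tot_pp[OF p, of 1] coprime_prime_right_iff[OF p] unfolding A_def by auto
  have nd: "\<not> int p dvd c * int t ^ k" if "t \<in> A" for t
  proof
    assume "int p dvd c * int t ^ k"
    then have "int p dvd int t ^ k" using c ip by (simp add: prime_dvd_mult_iff)
    then have "int p dvd int t" using prime_dvd_power[OF ip] by blast
    then show False using tA[OF that] by simp
  qed
  have phi_int: "int (\<phi> t) = (c * int t ^ k) mod int p" for t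
    unfolding \<phi>_def using p0 by simp
  have R_sub: "R \<subseteq> {1..p}"
  proof
    fix r assume "r \<in> R"
    then have "r \<in> \<phi> ` A" by (simp add: R_def)
    then obtain t where t: "t \<in> A" and r: "r = \<phi> t" by blast
    have "(c * int t ^ k) mod int p \<noteq> 0" using nd[OF t] by (simp add: dvd_eq_mod_eq_0)
    moreover have "(c * int t ^ k) mod int p < int p" "(c * int t ^ k) mod int p \<ge> 0" using p0 by simp_all
    ultimately have "0 < int r" "int r < int p" using phi_int r by auto
    then show "r \<in> {1..p}" by simp
  qed
  have WR: "W k p (int r) = W k p c" if rR: "r \<in> R" for r
  proof -
    have "r \<in> \<phi> ` A" using rR by (simp add: R_def)
    then obtain t where t: "t \<in> A" and r: "r = \<phi> t" by blast
    have "[int r = c * int t ^ k] (mod int p)" using phi_int r by (simp add: cong_def)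
    then have "W k p (int r) = W k p (c * int t ^ k)" by (rule W_cong[OF p0])
    also have "\<dots> = W k p c" by (rule W_invariant[OF p0 tA(2)[OF t]])
    finally show ?thesis .
  qed
  have fib: "card {t \<in> A. \<phi> t = r} \<le> k" if rR: "r \<in> R" for r
  proof -
    have "r \<in> \<phi> ` A" using rR by (simp add: R_def)
    then obtain t0 where t0: "t0 \<in> A" and r: "r = \<phi> t0" by blast
    have "{t \<in> A. \<phi> t = r} \<subseteq> {y \<in> totatives p. int p dvd int t0 ^ k - int y ^ k}"
    proof
      fix t assume t: "t \<in> {t \<in> A. \<phi> t = r}"
      then have "int (\<phi> t) = int (\<phi> t0)" using r by simp
      then have "[c * int t0 ^ k = c * int t ^ k] (mod int p)" unfolding phi_int by (simp add: cong_def)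
      then have "int p dvd c * (int t0 ^ k - int t ^ k)" by (simp add: cong_iff_dvd_diff algebra_simps)
      then have "int p dvd int t0 ^ k - int t ^ k" using c ip by (simp add: prime_dvd_mult_iff)
      then show "t \<in> {y \<in> totatives p. int p dvd int t0 ^ k - int y ^ k}" using t unfolding A_def by simp
    qed
    then have "card {t \<in> A. \<phi> t = r} \<le> card {y \<in> totatives p. int p dvd int t0 ^ k - int y ^ k}"
      by (intro card_mono) auto
    also have "\<dots> \<le> k" using roots_bound_tot[OF p, of t0 k] k by simp
    finally show ?thesis .
  qed
  have finR: "finite R" unfolding R_def A_def by simp
  have cardA: "card A \<le> k * card R"
  proof -
    have "card A = (\<Sum>r\<in>R. card {t \<in> A. \<phi> t = r})"
      using sum.group[of A R \<phi> "\<lambda>_. 1::nat"] finR unfolding R_def A_def by simp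
    also have "\<dots> \<le> (\<Sum>r\<in>R. k)" using fib by (intro sum_mono) auto
    finally show ?thesis by (simp add: mult.commute)
  qed
  have cA: "card A = p - 1" unfolding A_def using totient_prime[OF p] by (simp add: totient_def)
  define w where "w = (cmod (W k p c))^2"
  have "real (p - 1) * w \<le> real (k * card R) * w"
    using cardA cA unfolding w_def by (intro mult_right_mono) (simp_all only: of_nat_le_iff zero_le_power2)
  also have "\<dots> = real k * (\<Sum>r\<in>R. (cmod (W k p (int r)))^2)"
    unfolding w_def using WR by simp
  also have "\<dots> \<le> real k * (\<Sum>r\<in>{1..p}. (cmod (W k p (int r)))^2)"
    using R_sub by (intro mult_left_mono sum_mono2) auto
  also have "\<dots> = real k * (real p * real (card (Pairs k p)))" by (simp only: parseval[OF p0])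
  also have "\<dots> \<le> real k * (real p * real ((p - 1) * k))"
  proof (intro mult_left_mono)
    show "real (card (Pairs k p)) \<le> real ((p - 1) * k)" using card_Pairs[OF p k] by (simp only: of_nat_le_iff)
  qed simp_all
  finally have "real (p - 1) * w \<le> real k * (real p * real ((p - 1) * k))" .
  then have "real (p - 1) * w \<le> real k * (real p * (real (p - 1) * real k))" by (simp only: of_nat_mult)
  also have "\<dots> = real (p - 1) * (real k ^ 2 * real p)" by (simp only: power2_eq_square mult_ac)
  finally have "real (p - 1) * w \<le> real (p - 1) * (real k ^ 2 * real p)" .
  moreover have "real (p - 1) > 0" using p1 by simp
  ultimately have "w \<le> real k ^ 2 * real p" by simp
  also have "\<dots> = (real k * sqrt (real p))^2" by (simp add: power_mult_distrib)
  finally show ?thesis unfolding w_def by (rule power2_le_imp_le) simp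
qed

lemma T_bound_p:
  assumes p: "prime p" and k: "k > 0" and good: "\<forall>j\<in>{1..s}. \<not> int p dvd a j"
  shows "cmod (T k s a p) \<le> real (p - 1) * (real k * sqrt (real p)) ^ s / real (p - 1) ^ s"
proof -
  have ip: "prime (int p)" using p by simp
  have bd: "cmod (\<Prod>j\<in>{1..s}. W k p (a j * int r)) \<le> (real k * sqrt (real p)) ^ s"
    if r: "r \<in> totatives p" for r
  proof -
    have "\<not> p dvd r" using r tot_pp[OF p, of 1] by auto
    then have nr: "\<not> int p dvd int r" by simp
    have "cmod (\<Prod>j\<in>{1..s}. W k p (a j * int r)) = (\<Prod>j\<in>{1..s}. cmod (W k p (a j * int r)))"
      by (rule prod_norm[symmetric])
    also have "\<dots> \<le> (\<Prod>j\<in>{1..s}. real k * sqrt (real p))"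
    proof (rule prod_mono)
      fix j assume j: "j \<in> {1..s}"
      have "\<not> int p dvd a j * int r" using good j nr ip by (simp add: prime_dvd_mult_iff)
      then show "0 \<le> cmod (W k p (a j * int r)) \<and> cmod (W k p (a j * int r)) \<le> real k * sqrt (real p)"
        using W_bound[OF p k] by simp
    qed
    finally show ?thesis by simp
  qed
  have S: "cmod (\<Sum>r\<in>totatives p. \<Prod>j\<in>{1..s}. W k p (a j * int r)) \<le> real (p - 1) * (real k * sqrt (real p)) ^ s"
  proof -
    have "cmod (\<Sum>r\<in>totatives p. \<Prod>j\<in>{1..s}. W k p (a j * int r)) \<le> (\<Sum>r\<in>totatives p. (real k * sqrt (real p)) ^ s)"
      by (rule order_trans[OF norm_sum sum_mono]) (rule bd)
    also have "\<dots> = real (p - 1) * (real k * sqrt (real p)) ^ s"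
      using totient_prime[OF p] by (simp add: totient_def)
    finally show ?thesis .
  qed
  have "cmod (T k s a p) = (1 / real (p - 1) ^ s) * cmod (\<Sum>r\<in>totatives p. \<Prod>j\<in>{1..s}. W k p (a j * int r))"
    unfolding T_alt using totient_prime[OF p] by (simp add: norm_mult norm_divide norm_power)
  also have "\<dots> \<le> (1 / real (p - 1) ^ s) * (real (p - 1) * (real k * sqrt (real p)) ^ s)"
    by (rule mult_left_mono[OF S]) simp
  finally show ?thesis by simp
qed

lemma bound_arith:
  fixes x kk :: real and s :: nat
  assumes x: "x \<ge> 2" and s: "s \<ge> 5" and kk: "kk \<ge> 0"
  shows "(x - 1) * (kk * sqrt x) ^ s / (x - 1) ^ s \<le> 2 ^ s * kk ^ s * x powr (-3/2)"
proof -
  have x0: "x > 0" and y0: "x - 1 > 0" using x by auto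
  have s1: "s = Suc (s - 1)" using s by simp
  have ps: "(x - 1) ^ s = (x - 1) * (x - 1) ^ (s - 1)" using power_Suc[of "x - 1" "s - 1", folded s1] .
  have e1: "(kk * sqrt x) ^ s = kk ^ s * x powr (real s / 2)"
    using x0 by (simp add: power_mult_distrib sqrt_def root_powr_inverse powr_realpow[symmetric] powr_powr)
  have "(x - 1) * (kk * sqrt x) ^ s / (x - 1) ^ s = kk ^ s * x powr (real s / 2) / (x - 1) ^ (s - 1)"
    unfolding ps e1 using y0 by simp
  also have "kk ^ s * x powr (real s / 2) / (x - 1) ^ (s - 1) \<le> kk ^ s * x powr (real s / 2) / (x / 2) ^ (s - 1)"
    using x0 y0 x kk by (intro divide_left_mono power_mono mult_pos_pos) (auto intro: mult_nonneg_nonneg)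
  also have "\<dots> = 2 ^ (s - 1) * kk ^ s * (x powr (real s / 2) / x powr (real (s - 1)))"
    using x0 by (simp add: powr_realpow power_divide field_simps)
  also have "x powr (real s / 2) / x powr (real (s - 1)) = x powr (real s / 2 - real (s - 1))"
    by (simp add: powr_diff)
  also have "\<dots> \<le> x powr (-3/2)"
    using x s by (intro powr_mono) auto
  also have "2 ^ (s - 1) * kk ^ s * x powr (-3/2) \<le> 2 ^ s * kk ^ s * x powr (-3/2)"
    using kk by (intro mult_right_mono) (auto intro: power_increasing)
  finally show ?thesis using kk by (simp add: mult_left_mono)
qed

lemma coprime_imp_coprime_dvd': "coprime m n \<Longrightarrow> d1 dvd m \<Longrightarrow> d2 dvd n \<Longrightarrow> coprime d1 (d2::nat)"
  using coprime_divisors by blast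

lemma divisor_pairs_bij:
  assumes cop: "coprime m n" and m: "m > 0" and n: "(n::nat) > 0"
  shows "bij_betw (\<lambda>(d1, d2). d1 * d2) ({d. d dvd m} \<times> {d. d dvd n}) {d. d dvd m * n}"
  unfolding bij_betw_def
proof
  show "inj_on (\<lambda>(d1, d2). d1 * d2) ({d. d dvd m} \<times> {d. d dvd n})"
  proof (rule inj_onI, clarify)
    fix d1 d2 d1' d2' :: nat
    assume h: "d1 dvd m" "d2 dvd n" "d1' dvd m" "d2' dvd n" and eq: "d1 * d2 = d1' * d2'"
    have c1: "coprime d1 d2'" using coprime_imp_coprime_dvd'[OF cop h(1,4)] .
    have c2: "coprime d1' d2" using coprime_imp_coprime_dvd'[OF cop h(3,2)] .
    have "d1 dvd d1' * d2'" using eq by (metis dvd_triv_left)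
    then have a: "d1 dvd d1'" using c1 by (simp add: coprime_dvd_mult_left_iff)
    have "d1' dvd d1 * d2" using eq by (metis dvd_triv_left)
    then have b: "d1' dvd d1" using c2 by (simp add: coprime_dvd_mult_left_iff)
    have e1: "d1 = d1'" using a b by (rule dvd_antisym)
    have "d1 > 0" using h(1) m by (auto intro: Nat.gr0I)
    then have "d2 = d2'" using eq e1 by simp
    with e1 show "d1 = d1' \<and> d2 = d2'" by simp
  qed
next
  show "(\<lambda>(d1, d2). d1 * d2) ` ({d. d dvd m} \<times> {d. d dvd n}) = {d. d dvd m * n}"
  proof
    show "(\<lambda>(d1, d2). d1 * d2) ` ({d. d dvd m} \<times> {d. d dvd n}) \<subseteq> {d. d dvd m * n}"
      by (auto intro: mult_dvd_mono)
    show "{d. d dvd m * n} \<subseteq> (\<lambda>(d1, d2). d1 * d2) ` ({d. d dvd m} \<times> {d. d dvd n})"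
    proof
      fix d assume "d \<in> {d. d dvd m * n}"
      then obtain b c where "d = b * c" "b dvd m" "c dvd n" using division_decomp[of d m n] by auto
      then show "d \<in> (\<lambda>(d1, d2). d1 * d2) ` ({d. d dvd m} \<times> {d. d dvd n})" by force
    qed
  qed
qed

lemma divsum_mult:
  fixes f :: "nat \<Rightarrow> 'a::comm_monoid_add"
  assumes cop: "coprime m n" and m: "m > 0" and n: "n > 0"
  shows "(\<Sum>d\<in>{d. d dvd m * n}. f d) = (\<Sum>d1\<in>{d. d dvd m}. \<Sum>d2\<in>{d. d dvd n}. f (d1 * d2))"
proof -
  have "(\<Sum>d\<in>{d. d dvd m * n}. f d) = (\<Sum>x\<in>{d. d dvd m} \<times> {d. d dvd n}. f (case x of (d1, d2) \<Rightarrow> d1 * d2))"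
    by (rule sum.reindex_bij_betw[symmetric, OF divisor_pairs_bij[OF cop m n]])
  also have "\<dots> = (\<Sum>d1\<in>{d. d dvd m}. \<Sum>d2\<in>{d. d dvd n}. f (d1 * d2))"
    by (simp add: sum.cartesian_product split_def)
  finally show ?thesis .
qed

lemma T_mult:
  assumes "coprime m n" "m > 0" "n > 0"
  shows "T k s a (m * n) = T k s a m * T k s a n"
  using assms
proof (induction "m * n" arbitrary: m n rule: less_induct)
  case less
  note cop = less.prems(1) and m = less.prems(2) and n = less.prems(3)
  define g where "g = (\<lambda>(d1, d2). T k s a (d1 * d2) - T k s a d1 * T k s a d2)"
  let ?P = "{d. d dvd m} \<times> {d. d dvd n}"
  have finP: "finite ?P" using m n by simp
  have mnP: "(m, n) \<in> ?P" by simp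
  have "(\<Sum>x\<in>?P. g x) = (\<Sum>d1\<in>{d. d dvd m}. \<Sum>d2\<in>{d. d dvd n}. T k s a (d1 * d2)) -
      (\<Sum>d1\<in>{d. d dvd m}. \<Sum>d2\<in>{d. d dvd n}. T k s a d1 * T k s a d2)"
    unfolding g_def sum.cartesian_product by (simp add: split_def sum_subtractf)
  also have "(\<Sum>d1\<in>{d. d dvd m}. \<Sum>d2\<in>{d. d dvd n}. T k s a (d1 * d2)) = complex_of_real (Fr k s a (m * n))"
    using divsum_mult[OF cop m n, of "T k s a"] Fr_divsum[of "m * n" k s a] m n by simp
  also have "(\<Sum>d1\<in>{d. d dvd m}. \<Sum>d2\<in>{d. d dvd n}. T k s a d1 * T k s a d2) =
      complex_of_real (Fr k s a m) * complex_of_real (Fr k s a n)"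
    using Fr_divsum[OF m, of k s a] Fr_divsum[OF n, of k s a] by (simp add: sum_product)
  also have "complex_of_real (Fr k s a (m * n)) - complex_of_real (Fr k s a m) * complex_of_real (Fr k s a n) = 0"
    using Fr_mult[OF cop m n] by simp
  finally have S0: "(\<Sum>x\<in>?P. g x) = 0" .
  have rest: "(\<Sum>x\<in>?P - {(m, n)}. g x) = 0"
  proof (rule sum.neutral, intro ballI)
    fix x assume x: "x \<in> ?P - {(m, n)}"
    obtain d1 d2 where xe: "x = (d1, d2)" by fastforce
    have d: "d1 dvd m" "d2 dvd n" and ne: "(d1, d2) \<notin> {(m, n)}" using x unfolding xe by auto
    have d1: "d1 > 0" "d1 \<le> m" using d m by (auto intro: Nat.gr0I dvd_imp_le)
    have d2: "d2 > 0" "d2 \<le> n" using d n by (auto intro: Nat.gr0I dvd_imp_le)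
    have "d1 < m \<or> d2 < n" using ne d1 d2 by auto
    then have lt: "d1 * d2 < m * n"
      using d1 d2 by (auto intro: mult_less_le_imp_less mult_le_less_imp_less)
    have "coprime d1 d2" using coprime_imp_coprime_dvd'[OF cop d] .
    then have "T k s a (d1 * d2) = T k s a d1 * T k s a d2" using less.hyps[OF lt] d1 d2 by blast
    then show "g x = 0" unfolding g_def xe by simp
  qed
  have "(\<Sum>x\<in>?P. g x) = g (m, n) + (\<Sum>x\<in>?P - {(m, n)}. g x)"
    by (rule sum.remove[OF finP mnP])
  then have "g (m, n) = 0" using S0 rest by simp
  then show ?case unfolding g_def by simp
qed

definition multf :: "(nat \<Rightarrow> 'a::comm_monoid_mult) \<Rightarrow> bool" where
  "multf h \<longleftrightarrow> (\<forall>m n. coprime m n \<longrightarrow> m > 0 \<longrightarrow> n > 0 \<longrightarrow> h (m * n) = h m * h n)"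

lemma multf_prod_primes:
  fixes ex :: "nat \<Rightarrow> nat"
  assumes h: "multf h" and S: "finite S" and P: "\<forall>p\<in>S. prime p"
  shows "h (\<Prod>p\<in>S. p ^ ex p) = h 1 * (\<Prod>p\<in>S. h (p ^ ex p))"
  using S P
proof (induction S rule: finite_induct)
  case empty then show ?case by simp
next
  case (insert p S)
  have pp: "prime p" using insert by simp
  have c: "coprime (p ^ ex p) (\<Prod>q\<in>S. q ^ ex q)"
  proof (rule prod_coprime_right)
    fix q assume q: "q \<in> S"
    then have "prime q" "q \<noteq> p" using insert by auto
    then have "coprime p q" using pp primes_coprime by blast
    then show "coprime (p ^ ex p) (q ^ ex q)" by simp
  qed
  have pos1: "p ^ ex p > 0" using pp by (simp add: prime_gt_0_nat)
  have pos2: "(\<Prod>q\<in>S. q ^ ex q) > 0" using insert.prems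
    by (intro prod_pos) (auto simp: prime_gt_0_nat)
  have "h (\<Prod>q\<in>insert p S. q ^ ex q) = h (p ^ ex p * (\<Prod>q\<in>S. q ^ ex q))" using insert by simp
  also have "\<dots> = h (p ^ ex p) * h (\<Prod>q\<in>S. q ^ ex q)" using h c pos1 pos2 unfolding multf_def by blast
  also have "\<dots> = h 1 * (\<Prod>q\<in>insert p S. h (q ^ ex q))" using insert by (simp add: mult_ac)
  finally show ?case .
qed

lemma multf_Fr: "multf (Fr k s a)"
  unfolding multf_def using Fr_mult by blast

lemma multf_divsum:
  fixes g :: "nat \<Rightarrow> 'a::comm_semiring_1"
  assumes "multf g"
  shows "multf (\<lambda>n. \<Sum>d\<in>{d. d dvd n}. g d)"
  unfolding multf_def
proof (intro allI impI)
  fix m n :: nat assume cop: "coprime m n" and m: "m > 0" and n: "n > 0"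
  have "(\<Sum>d\<in>{d. d dvd m * n}. g d) = (\<Sum>d1\<in>{d. d dvd m}. \<Sum>d2\<in>{d. d dvd n}. g (d1 * d2))"
    by (rule divsum_mult[OF cop m n])
  also have "\<dots> = (\<Sum>d1\<in>{d. d dvd m}. \<Sum>d2\<in>{d. d dvd n}. g d1 * g d2)"
  proof (intro sum.cong refl)
    fix d1 d2 assume d: "d1 \<in> {d. d dvd m}" "d2 \<in> {d. d dvd n}"
    have "coprime d1 d2" using coprime_imp_coprime_dvd'[OF cop] d by auto
    moreover have "d1 > 0" "d2 > 0" using d m n by (auto intro: Nat.gr0I)
    ultimately show "g (d1 * d2) = g d1 * g d2" using assms unfolding multf_def by blast
  qed
  also have "\<dots> = (\<Sum>d\<in>{d. d dvd m}. g d) * (\<Sum>d\<in>{d. d dvd n}. g d)"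
    by (simp add: sum_product)
  finally show "(\<Sum>d\<in>{d. d dvd m * n}. g d) = (\<Sum>d\<in>{d. d dvd m}. g d) * (\<Sum>d\<in>{d. d dvd n}. g d)" .
qed

lemma multf_normT: "multf (\<lambda>n. cmod (T k s a n))"
  unfolding multf_def using T_mult by (simp add: norm_mult)

definition P0 :: "nat \<Rightarrow> nat \<Rightarrow> (nat \<Rightarrow> int) \<Rightarrow> nat" where
  "P0 k s a = k + (\<Sum>j\<in>{1..s}. nat \<bar>a j\<bar>) + 2"

definition Bp :: "nat \<Rightarrow> nat \<Rightarrow> (nat \<Rightarrow> int) \<Rightarrow> nat \<Rightarrow> real" where
  "Bp k s a p = (\<Sum>i\<le>Lp k a p. cmod (T k s a (p ^ i)))"

definition C0 :: "nat \<Rightarrow> nat \<Rightarrow> real" where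
  "C0 k s = 2 ^ s * real k ^ s"

context
  fixes k s :: nat and a :: "nat \<Rightarrow> int"
  assumes k: "k > 0" and s: "s \<ge> 5" and anz: "\<forall>j\<in>{1..s}. a j \<noteq> 0"
begin

lemma s1: "s \<ge> 1" using s by simp
lemma a1: "a 1 \<noteq> 0" using anz s by auto

lemma good_props:
  assumes p: "prime p" and pP: "p \<ge> P0 k s a"
  shows "\<not> p dvd k" "\<forall>j\<in>{1..s}. \<not> int p dvd a j" "Lp k a p = 2"
proof -
  have pk: "p > k" using pP by (simp add: P0_def)
  show nk: "\<not> p dvd k" using pk k by (auto dest: dvd_imp_le)
  show na: "\<forall>j\<in>{1..s}. \<not> int p dvd a j"
  proof
    fix j assume j: "j \<in> {1..s}"
    have "nat \<bar>a j\<bar> \<le> (\<Sum>j\<in>{1..s}. nat \<bar>a j\<bar>)"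
      using j by (intro member_le_sum) auto
    then have "\<bar>a j\<bar> < int p" using pP unfolding P0_def by linarith
    moreover have "a j \<noteq> 0" using anz j by auto
    ultimately show "\<not> int p dvd a j" using dvd_imp_le_int[of "a j" "int p"] by auto
  qed
  have "multiplicity p k = 0" using nk by (rule not_dvd_imp_multiplicity_0)
  moreover have "multiplicity (int p) (a 1) = 0" using na s by (intro not_dvd_imp_multiplicity_0) auto
  ultimately show "Lp k a p = 2" by (simp add: Lp_def)
qed

lemma P0_ge2: "P0 k s a \<ge> 2" by (simp add: P0_def)

lemma T_good_sq:
  assumes p: "prime p" and pP: "p \<ge> P0 k s a"
  shows "T k s a (p ^ 2) = 0"
  using T_vanish[of p k s a 2, OF p k s1 a1] good_props(3)[OF p pP] by simp

lemma chi_good: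
  assumes p: "prime p" and pP: "p \<ge> P0 k s a"
  shows "complex_of_real (chi k s a p) = 1 + T k s a p"
proof -
  have "complex_of_real (chi k s a p) = (\<Sum>i\<le>2. T k s a (p ^ i))"
    using chi_complex[of p k s a, OF p k s1 a1] good_props(3)[OF p pP] by simp
  also have "\<dots> = T k s a 1 + T k s a p + T k s a (p ^ 2)"
    by (simp add: numeral_2_eq_2)
  finally show ?thesis using T_good_sq[OF p pP] T_1 by simp
qed

lemma Tp_bound:
  assumes p: "prime p" and pP: "p \<ge> P0 k s a"
  shows "cmod (T k s a p) \<le> C0 k s * real p powr (-3/2)"
proof -
  have p2: "real p \<ge> 2" using prime_ge_2_nat[OF p] by simp
  have "cmod (T k s a p) \<le> real (p - 1) * (real k * sqrt (real p)) ^ s / real (p - 1) ^ s"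
    by (rule T_bound_p[OF p k good_props(2)[OF p pP]])
  also have "real (p - 1) = real p - 1" using p2 by simp
  also have "(real p - 1) * (real k * sqrt (real p)) ^ s / (real p - 1) ^ s \<le> 2 ^ s * real k ^ s * real p powr (-3/2)"
    by (rule bound_arith[OF p2 s]) simp
  finally show ?thesis by (simp add: C0_def)
qed

lemma Bp_ge1: "Bp k s a p \<ge> 1"
proof -
  have "Bp k s a p = cmod (T k s a (p ^ 0)) + (\<Sum>i\<in>{1..Lp k a p}. cmod (T k s a (p ^ i)))"
    unfolding Bp_def by (simp add: atMost_atLeast0 sum.atLeast_Suc_atMost)
  moreover have "(\<Sum>i\<in>{1..Lp k a p}. cmod (T k s a (p ^ i))) \<ge> 0" by (intro sum_nonneg) simp
  ultimately show ?thesis using T_1 by simp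
qed

lemma Bp_good:
  assumes p: "prime p" and pP: "p \<ge> P0 k s a"
  shows "Bp k s a p = 1 + cmod (T k s a p)"
  unfolding Bp_def using good_props(3)[OF p pP] T_good_sq[OF p pP] T_1
  by (simp add: numeral_2_eq_2)

lemma divsum_pp_norm:
  assumes p: "prime p" and e: "ex \<ge> Lp k a p"
  shows "(\<Sum>d\<in>{d. d dvd p ^ ex}. cmod (T k s a d)) = Bp k s a p"
proof -
  have p1: "p > 1" using p by (rule prime_gt_1_nat)
  have "(\<Sum>d\<in>{d. d dvd p ^ ex}. cmod (T k s a d)) = (\<Sum>i\<le>ex. cmod (T k s a (p ^ i)))"
    unfolding divisors_pp[OF p]
    by (rule sum.reindex_cong[where l = "\<lambda>i. p ^ i"]) (use p1 in \<open>auto simp: inj_on_def\<close>)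
  also have "\<dots> = (\<Sum>i\<le>Lp k a p. cmod (T k s a (p ^ i)))"
  proof (rule sum.mono_neutral_right)
    show "\<forall>i\<in>{..ex} - {..Lp k a p}. cmod (T k s a (p ^ i)) = 0"
      using T_vanish[of p k s a, OF p k s1 a1] by auto
  qed (use e in auto)
  finally show ?thesis unfolding Bp_def .
qed

definition DN :: "nat \<Rightarrow> nat" where
  "DN N = (\<Prod>p\<in>{p. prime p \<and> p \<le> N}. p ^ (Lp k a p + N))"

lemma finite_primes_le: "finite {p::nat. prime p \<and> p \<le> N}" by simp

lemma DN_pos: "DN N > 0"
  unfolding DN_def by (intro prod_pos) (auto simp: prime_gt_0_nat)

lemma mult_le_self: "q > 0 \<Longrightarrow> prime p \<Longrightarrow> multiplicity p q \<le> (q::nat)"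
proof -
  assume q: "q > 0" and p: "prime p"
  have "p ^ multiplicity p q dvd q" by (rule multiplicity_dvd)
  then have "p ^ multiplicity p q \<le> q" using q by (rule dvd_imp_le)
  moreover have "multiplicity p q < 2 ^ multiplicity p q" by (rule less_exp)
  moreover have "(2::nat) ^ multiplicity p q \<le> p ^ multiplicity p q"
    using prime_ge_2_nat[OF p] by (rule power_mono) simp
  ultimately show ?thesis by linarith
qed

lemma dvd_DN:
  assumes q: "q \<in> {1..N}"
  shows "q dvd DN N"
proof -
  have q0: "q \<noteq> 0" using q by simp
  have "q = (\<Prod>p\<in>prime_factors q. p ^ multiplicity p q)"
    using prod_prime_factors[OF q0] by simp
  also have "\<dots> dvd DN N" unfolding DN_def
  proof (rule prod_dvd_prod_subset2)
    show "prime_factors q \<subseteq> {p. prime p \<and> p \<le> N}"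
    proof
      fix p assume "p \<in> prime_factors q"
      then have "prime p" "p dvd q" by (auto simp: in_prime_factors_iff)
      then show "p \<in> {p. prime p \<and> p \<le> N}" using q q0 dvd_imp_le[of p q] by auto
    qed
  next
    fix p assume "p \<in> prime_factors q"
    then have "prime p" by (auto simp: in_prime_factors_iff)
    then have "multiplicity p q \<le> N" using mult_le_self[of q p] q by auto
    then show "p ^ multiplicity p q dvd p ^ (Lp k a p + N)" by (intro le_imp_power_dvd) simp
  qed simp
  finally show ?thesis .
qed

lemma divsum_DN_norm:
  "(\<Sum>d\<in>{d. d dvd DN N}. cmod (T k s a d)) = (\<Prod>p\<in>{p. prime p \<and> p \<le> N}. Bp k s a p)"
proof -
  have m: "multf (\<lambda>n. \<Sum>d\<in>{d. d dvd n}. cmod (T k s a d))"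
    by (rule multf_divsum[OF multf_normT])
  have "(\<Sum>d\<in>{d. d dvd DN N}. cmod (T k s a d)) =
      (\<Sum>d\<in>{d. d dvd 1}. cmod (T k s a d)) *
      (\<Prod>p\<in>{p. prime p \<and> p \<le> N}. \<Sum>d\<in>{d. d dvd p ^ (Lp k a p + N)}. cmod (T k s a d))"
    unfolding DN_def by (rule multf_prod_primes[OF m finite_primes_le]) simp
  also have "(\<Sum>d\<in>{d. d dvd 1}. cmod (T k s a d)) = 1" using T_1 by simp
  also have "(\<Prod>p\<in>{p. prime p \<and> p \<le> N}. \<Sum>d\<in>{d. d dvd p ^ (Lp k a p + N)}. cmod (T k s a d)) =
      (\<Prod>p\<in>{p. prime p \<and> p \<le> N}. Bp k s a p)"
    by (intro prod.cong refl divsum_pp_norm) auto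
  finally show ?thesis by simp
qed

lemma Fr_DN:
  "Fr k s a (DN N) = (\<Prod>p\<in>{p. prime p \<and> p \<le> N}. chi k s a p)"
proof -
  have "Fr k s a (DN N) = Fr k s a 1 * (\<Prod>p\<in>{p. prime p \<and> p \<le> N}. Fr k s a (p ^ (Lp k a p + N)))"
    unfolding DN_def by (rule multf_prod_primes[OF multf_Fr finite_primes_le]) simp
  also have "(\<Prod>p\<in>{p. prime p \<and> p \<le> N}. Fr k s a (p ^ (Lp k a p + N))) = (\<Prod>p\<in>{p. prime p \<and> p \<le> N}. chi k s a p)"
  proof (intro prod.cong refl)
    fix p assume "p \<in> {p. prime p \<and> p \<le> N}"
    then have p: "prime p" by simp
    have "Fr k s a (p ^ (Lp k a p + N)) = Fr k s a (p ^ Lp k a p)"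
      by (rule Fr_pp_stable[of p k s a, OF p k s1 a1]) simp
    also have "\<dots> = chi k s a p" by (rule chi_props(3)[of p k s a, OF p k s1 a1, symmetric])
    finally show "Fr k s a (p ^ (Lp k a p + N)) = chi k s a p" .
  qed
  also have "Fr k s a 1 = 1" by (rule Fr_1)
  finally show ?thesis by simp
qed

definition Kc :: real where
  "Kc = (\<Prod>p\<in>{p. prime p \<and> p \<le> P0 k s a}. Bp k s a p) * exp (C0 k s * (\<Sum>n. real n powr (-3/2)))"

lemma summable_powr: "summable (\<lambda>n. real n powr (-3/2))"
  by (simp add: summable_real_powr_iff)

lemma prod_Bp_bound: "(\<Prod>p\<in>{p. prime p \<and> p \<le> N}. Bp k s a p) \<le> Kc"
proof -
  let ?A = "{p. prime p \<and> p \<le> N \<and> p < P0 k s a}"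
  let ?B = "{p. prime p \<and> p \<le> N \<and> p \<ge> P0 k s a}"
  have split: "{p. prime p \<and> p \<le> N} = ?A \<union> ?B" by auto
  have finA: "finite ?A" and finB: "finite ?B" by (auto intro: finite_subset[OF _ finite_primes_le[of N]])
  have "(\<Prod>p\<in>{p. prime p \<and> p \<le> N}. Bp k s a p) = (\<Prod>p\<in>?A. Bp k s a p) * (\<Prod>p\<in>?B. Bp k s a p)"
    unfolding split by (rule prod.union_disjoint[OF finA finB]) auto
  also have "\<dots> \<le> (\<Prod>p\<in>{p. prime p \<and> p \<le> P0 k s a}. Bp k s a p) * exp (C0 k s * (\<Sum>n. real n powr (-3/2)))"
  proof (rule mult_mono)
    show "(\<Prod>p\<in>?A. Bp k s a p) \<le> (\<Prod>p\<in>{p. prime p \<and> p \<le> P0 k s a}. Bp k s a p)"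
      by (rule prod_mono2) (use Bp_ge1 in \<open>auto intro: order_trans[OF zero_le_one]\<close>)
    have "(\<Prod>p\<in>?B. Bp k s a p) \<le> (\<Prod>p\<in>?B. exp (C0 k s * real p powr (-3/2)))"
    proof (rule prod_mono, safe)
      fix p assume p: "prime p" "p \<le> N" "P0 k s a \<le> p"
      show "0 \<le> Bp k s a p" using Bp_ge1 by (rule order_trans[OF zero_le_one])
      have "Bp k s a p = 1 + cmod (T k s a p)" by (rule Bp_good[OF p(1,3)])
      also have "\<dots> \<le> 1 + C0 k s * real p powr (-3/2)" using Tp_bound[OF p(1,3)] by simp
      also have "\<dots> \<le> exp (C0 k s * real p powr (-3/2))" using exp_ge_add_one_self[of "C0 k s * real p powr (-3/2)"] by simp
      finally show "Bp k s a p \<le> exp (C0 k s * real p powr (-3/2))" .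
    qed
    also have "\<dots> = exp (C0 k s * (\<Sum>p\<in>?B. real p powr (-3/2)))"
      using finB by (simp add: exp_sum sum_distrib_left)
    also have "\<dots> \<le> exp (C0 k s * (\<Sum>n. real n powr (-3/2)))"
    proof -
      have "(\<Sum>p\<in>?B. real p powr (-3/2)) \<le> (\<Sum>n. real n powr (-3/2))"
        by (rule sum_le_suminf[OF summable_powr finB]) simp
      moreover have "C0 k s \<ge> 0" by (simp add: C0_def)
      ultimately show ?thesis by (simp add: mult_left_mono)
    qed
    finally show "(\<Prod>p\<in>?B. Bp k s a p) \<le> exp (C0 k s * (\<Sum>n. real n powr (-3/2)))" .
  qed (use Bp_ge1 in \<open>auto intro: prod_nonneg order_trans[OF zero_le_one]\<close>)
  finally show ?thesis unfolding Kc_def .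
qed

lemma summable_normT: "summable (\<lambda>q. cmod (T k s a (Suc q)))"
proof (rule bounded_imp_summable)
  fix n
  have "(\<Sum>q\<le>n. cmod (T k s a (Suc q))) = (\<Sum>q\<in>{1..Suc n}. cmod (T k s a q))"
    by (rule sum.reindex_bij_witness[of _ "\<lambda>q. q - 1" Suc]) auto
  also have "\<dots> \<le> (\<Sum>d\<in>{d. d dvd DN (Suc n)}. cmod (T k s a d))"
    by (rule sum_mono2) (use DN_pos dvd_DN in \<open>auto\<close>)
  also have "\<dots> \<le> Kc" unfolding divsum_DN_norm by (rule prod_Bp_bound)
  finally show "(\<Sum>q\<le>n. cmod (T k s a (Suc q))) \<le> Kc" .
qed simp

end

context
  fixes k s :: nat and a :: "nat \<Rightarrow> int"
  assumes k: "k > 0" and s: "s \<ge> 5" and anz: "\<forall>j\<in>{1..s}. a j \<noteq> 0"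
begin

lemma s1': "s \<ge> 1" using s by simp
lemma a1': "a 1 \<noteq> 0" using anz s by auto

lemma summableT: "summable (\<lambda>q. T k s a (Suc q))"
  by (rule summable_norm_cancel) (rule summable_normT[OF k s anz])

lemma tail_bound:
  assumes finA: "finite A" and A0: "0 \<notin> A" and An: "{1..n} \<subseteq> A"
  shows "cmod ((\<Sum>d\<in>A. T k s a d) - (\<Sum>q. T k s a (Suc q))) \<le>
         (\<Sum>q. cmod (T k s a (Suc q))) - (\<Sum>q<n. cmod (T k s a (Suc q)))"
proof -
  define f where "f q = T k s a (Suc q)" for q
  define g where "g q = cmod (f q)" for q
  define h where "h q = (if Suc q \<in> A then f q else 0)" for q
  have sf: "summable f" unfolding f_def by (rule summableT)
  have sg: "summable g" unfolding g_def f_def by (rule summable_normT[OF k s anz])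
  have "{q. Suc q \<in> A} = Suc -` A" by auto
  then have finN: "finite {q. Suc q \<in> A}" using finite_vimageI[OF finA, of Suc] by simp
  have sh: "summable h" by (rule summable_finite[OF finN]) (simp add: h_def)
  have "suminf h = (\<Sum>q\<in>{q. Suc q \<in> A}. h q)" by (rule suminf_finite[OF finN]) (simp add: h_def)
  also have "\<dots> = (\<Sum>q\<in>{q. Suc q \<in> A}. T k s a (Suc q))" by (simp add: h_def f_def)
  also have "\<dots> = (\<Sum>d\<in>A. T k s a d)"
  proof (rule sum.reindex_bij_witness[of _ "\<lambda>d. d - 1" Suc])
    fix b assume b: "b \<in> A"
    have "b \<noteq> 0"
    proof
      assume "b = 0" then show False using A0 b by simp
    qed
    then have "Suc (b - 1) = b" by simp
    then show "Suc (b - 1) = b" "b - 1 \<in> {q. Suc q \<in> A}" using b by auto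
  qed auto
  finally have hA: "suminf h = (\<Sum>d\<in>A. T k s a d)" .
  have d: "(\<Sum>d\<in>A. T k s a d) - (\<Sum>q. T k s a (Suc q)) = (\<Sum>q. h q - f q)"
    using hA suminf_diff[OF sh sf] unfolding f_def by simp
  define u where "u q = (if q < n then 0 else g q)" for q
  have su: "summable u" unfolding u_def
    by (rule summable_comparison_test[OF _ sg]) (auto simp: g_def)
  have le: "norm (h q - f q) \<le> u q" for q
  proof (cases "Suc q \<in> A")
    case True
    then show ?thesis by (auto simp: h_def u_def g_def)
  next
    case False
    have "\<not> q < n"
    proof
      assume "q < n"
      then have "Suc q \<in> {1..n}" by simp
      then show False using An False by blast
    qed
    then show ?thesis using False by (simp add: h_def u_def g_def)
  qed
  have snorm: "summable (\<lambda>q. norm (h q - f q))"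
    by (rule summable_comparison_test[OF _ su]) (use le in auto)
  have "cmod (\<Sum>q. h q - f q) \<le> (\<Sum>q. norm (h q - f q))" by (rule summable_norm[OF snorm])
  also have "\<dots> \<le> suminf u" by (rule suminf_le[OF le snorm su])
  also have "suminf u = suminf g - (\<Sum>q<n. g q)"
  proof -
    have sv: "summable (\<lambda>q. if q < n then g q else 0)" by (rule summable_finite[of "{..<n}"]) auto
    have "(\<Sum>q. if q < n then g q else 0) = (\<Sum>q\<in>{..<n}. if q < n then g q else 0)"
      by (rule suminf_finite) auto
    also have "\<dots> = (\<Sum>q<n. g q)" by simp
    finally have "(\<Sum>q. if q < n then g q else 0) = (\<Sum>q<n. g q)" .
    moreover have "suminf g = (\<Sum>q. if q < n then g q else 0) + suminf u"
      using suminf_add[OF sv su] by (simp add: u_def if_distrib cong: if_cong)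
    ultimately show ?thesis by simp
  qed
  finally show ?thesis unfolding d g_def f_def .
qed

lemma prod_chi_tendsto:
  "(\<lambda>n. complex_of_real (\<Prod>p\<in>{p. prime p \<and> p \<le> n}. chi k s a p)) \<longlonglongrightarrow> (\<Sum>q. T k s a (Suc q))"
proof (rule LIM_zero_cancel, rule Lim_null_comparison)
  let ?G = "\<lambda>n. (\<Sum>q. cmod (T k s a (Suc q))) - (\<Sum>q<n. cmod (T k s a (Suc q)))"
  show "\<forall>\<^sub>F n in sequentially. norm (complex_of_real (\<Prod>p\<in>{p. prime p \<and> p \<le> n}. chi k s a p) - (\<Sum>q. T k s a (Suc q))) \<le> ?G n"
  proof (rule always_eventually, rule allI)
    fix n
    have "complex_of_real (\<Prod>p\<in>{p. prime p \<and> p \<le> n}. chi k s a p) = complex_of_real (Fr k s a (DN k a n))"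
      using Fr_DN[OF k s anz] by simp
    also have "\<dots> = (\<Sum>d\<in>{d. d dvd DN k a n}. T k s a d)" by (rule Fr_divsum[OF DN_pos[OF k s anz]])
    finally have e: "complex_of_real (\<Prod>p\<in>{p. prime p \<and> p \<le> n}. chi k s a p) = (\<Sum>d\<in>{d. d dvd DN k a n}. T k s a d)" .
    show "norm (complex_of_real (\<Prod>p\<in>{p. prime p \<and> p \<le> n}. chi k s a p) - (\<Sum>q. T k s a (Suc q))) \<le> ?G n"
      unfolding e
    proof (rule tail_bound)
      show "finite {d. d dvd DN k a n}" using DN_pos[OF k s anz] by simp
      show "0 \<notin> {d. d dvd DN k a n}" using DN_pos[OF k s anz] by (auto intro: Nat.gr0I)
      show "{1..n} \<subseteq> {d. d dvd DN k a n}" using dvd_DN[OF k s anz] by auto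
    qed
  qed
  have "(\<lambda>n. \<Sum>q<n. cmod (T k s a (Suc q))) \<longlonglongrightarrow> (\<Sum>q. cmod (T k s a (Suc q)))"
    by (rule summable_LIMSEQ[OF summable_normT[OF k s anz]])
  then have "(\<lambda>n. (\<Sum>q. cmod (T k s a (Suc q))) - (\<Sum>q<n. cmod (T k s a (Suc q)))) \<longlonglongrightarrow>
      (\<Sum>q. cmod (T k s a (Suc q))) - (\<Sum>q. cmod (T k s a (Suc q)))"
    by (intro tendsto_diff tendsto_const)
  then show "?G \<longlonglongrightarrow> 0" by simp
qed

lemma prod_euler_eq: "(\<Prod>i\<le>n. euler_factor k s a i) = (\<Prod>p\<in>{p. prime p \<and> p \<le> n}. chi k s a p)"
proof -
  have "(\<Prod>i\<le>n. euler_factor k s a i) = (\<Prod>i\<in>{..n}. if prime i then chi k s a i else 1)"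
    unfolding euler_factor_def ..
  also have "\<dots> = (\<Prod>i\<in>{x\<in>{..n}. prime x}. chi k s a i)"
    by (rule prod.inter_filter[symmetric]) simp
  also have "{x\<in>{..n}. prime x} = {p. prime p \<and> p \<le> n}" by auto
  finally show ?thesis .
qed

lemma euler_nonneg: "euler_factor k s a i \<ge> 0"
  unfolding euler_factor_def using chi_nonneg[of i k s a, OF _ k s1' a1'] by auto

lemma summable_euler: "summable (\<lambda>i. norm (euler_factor k s a i - 1))"
proof (rule summable_comparison_test')
  show "summable (\<lambda>n. C0 k s * real n powr (-3/2))"
    by (rule summable_mult) (simp add: summable_real_powr_iff)
  fix n assume n: "n \<ge> P0 k s a"
  show "norm (norm (euler_factor k s a n - 1)) \<le> C0 k s * real n powr (-3/2)"
  proof (cases "prime n")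
    case True
    have "complex_of_real (chi k s a n - 1) = T k s a n"
      using chi_good[OF k s anz True n] by simp
    then have "\<bar>chi k s a n - 1\<bar> = cmod (T k s a n)" by (metis norm_of_real)
    then show ?thesis using Tp_bound[OF k s anz True n] True by (simp add: euler_factor_def)
  next
    case False
    then show ?thesis by (simp add: euler_factor_def C0_def)
  qed
qed

end

theorem lemma2p1:
  fixes k s :: nat and a :: "nat \<Rightarrow> int"
  assumes "k \<ge> 2" and "s \<ge> 5" and "\<forall>j\<in>{1..s}. a j \<noteq> 0"
  shows "(\<forall>p. prime p \<longrightarrow> convergent (chi_seq k s a p))
    \<and> summable (\<lambda>q. T k s a (Suc q))
    \<and> convergent_prod (euler_factor k s a)
    \<and> abs_convergent_prod (euler_factor k s a)
    \<and> singular_series k s a = complex_of_real (prodinf (euler_factor k s a))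
    \<and> (\<forall>p. prime p \<longrightarrow> chi k s a p \<ge> 0)
    \<and> (Re (singular_series k s a) > 0 \<longleftrightarrow> (\<forall>p. prime p \<longrightarrow> chi k s a p > 0))
    \<and> Re (singular_series k s a) \<ge> 0"
proof -
  have k: "k > 0" using assms(1) by simp
  note s = assms(2) and anz = assms(3)
  have s1: "s \<ge> 1" using s by simp
  have a1: "a 1 \<noteq> 0" using anz s by auto
  let ?E = "euler_factor k s a"
  have C1: "\<forall>p. prime p \<longrightarrow> convergent (chi_seq k s a p)"
    using chi_props(2)[of _ k s a, OF _ k s1 a1] by blast
  have C2: "summable (\<lambda>q. T k s a (Suc q))" by (rule summableT[OF k s anz])
  have C4: "abs_convergent_prod ?E"
    by (rule summable_imp_abs_convergent_prod) (rule summable_euler[OF k s anz])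
  have C3: "convergent_prod ?E" by (rule abs_convergent_prod_imp_convergent_prod[OF C4])
  have L1: "(\<lambda>n. \<Prod>i\<le>n. ?E i) \<longlonglongrightarrow> prodinf ?E" by (rule convergent_prod_LIMSEQ[OF C3])
  then have L2: "(\<lambda>n. complex_of_real (\<Prod>i\<le>n. ?E i)) \<longlonglongrightarrow> complex_of_real (prodinf ?E)"
    by (rule tendsto_of_real)
  have L3: "(\<lambda>n. complex_of_real (\<Prod>i\<le>n. ?E i)) \<longlonglongrightarrow> singular_series k s a"
    unfolding singular_series_def prod_euler_eq[OF k s anz] by (rule prod_chi_tendsto[OF k s anz])
  have C5: "singular_series k s a = complex_of_real (prodinf ?E)"
    using L3 L2 by (rule LIMSEQ_unique)
  have C6: "\<forall>p. prime p \<longrightarrow> chi k s a p \<ge> 0"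
    using chi_nonneg[of _ k s a, OF _ k s1 a1] by blast
  have ReS: "Re (singular_series k s a) = prodinf ?E" using C5 by simp
  have C8: "prodinf ?E \<ge> 0"
    by (rule LIMSEQ_le_const[OF L1]) (use euler_nonneg[OF k s anz] in \<open>auto intro: prod_nonneg\<close>)
  have C7: "prodinf ?E > 0 \<longleftrightarrow> (\<forall>p. prime p \<longrightarrow> chi k s a p > 0)"
  proof
    assume pos: "prodinf ?E > 0"
    show "\<forall>p::nat. prime p \<longrightarrow> chi k s a p > 0"
    proof (intro allI impI)
      fix p :: nat assume p: "prime p"
      show "chi k s a p > 0"
      proof (rule ccontr)
        assume np: "\<not> chi k s a p > 0"
        have "chi k s a p \<ge> 0" using C6 p by blast
        then have "chi k s a p = 0" using np by linarith
        then have z: "?E p = 0" using p by (simp add: euler_factor_def)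
        have "\<forall>\<^sub>F n in sequentially. (\<Prod>i\<le>n. ?E i) = 0"
          by (rule eventually_sequentiallyI[of p]) (use z in \<open>auto intro: prod_zero\<close>)
        then have "(\<lambda>n. \<Prod>i\<le>n. ?E i) \<longlonglongrightarrow> 0" by (rule tendsto_eventually)
        then have "prodinf ?E = 0" using L1 LIMSEQ_unique by blast
        then show False using pos by simp
      qed
    qed
  next
    assume "\<forall>p. prime p \<longrightarrow> chi k s a p > 0"
    then have "\<And>i. ?E i > 0" by (simp add: euler_factor_def)
    then show "prodinf ?E > 0" by (rule less_0_prodinf[OF C3])
  qed
  show ?thesis using C1 C2 C3 C4 C5 C6 C7 C8 ReS by simp
qed

end
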